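(* Let $p$ be a prime, $m\ge 2$, $G$ an elementary abelian $p$-group of rank $m$, $J$ the Jacobson radical of $\mathbb{F}_pG$, and $N=m(p-1)$. Then for $0<r<N$ the ideal $J^r$ is not a principal ideal of $\mathbb{F}_pG$, while $J^N=\mathbb{F}_p\sum_{g\in G}g$ is principal. Consequently, for $0\le i\le N$, the ideal $J^i$ is checkable in $\mathbb{F}_pG$ if and only if $i\in\{0,1\}$. (Equivalently, with $\mathrm{RM}_p(r,m)=J^{N-r}$ the Reed–Muller code of order $r$ and length $p^m$ over $\mathbb{F}_p$, $0\le r\le N$, the only checkable Reed–Muller codes are $\mathrm{RM}_p(N,m)=\mathbb{F}_pG$ and $\mathrm{RM}_p(N-1,m)=J$.)
   Context: A right ideal $I$ of a group algebra $KG$ is called checkable if there is $v\in KG$ with $I=\{a\in KG: va=0\}$. Here $\mathbb{F}_pG$ is commutative, so right ideals are ideals. *)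

theory Defs
  imports "HOL-Computational_Algebra.Primes" "HOL-Algebra.Ideal_Product"
begin

definition group_algebra :: "('g, 'c) monoid_scheme \<Rightarrow> ('g \<Rightarrow> 'k::field) ring" where
  "group_algebra G =
     \<lparr> carrier = {f. \<forall>x. x \<notin> carrier G \<longrightarrow> f x = 0},
       mult = (\<lambda>a b g. if g \<in> carrier G
                        then (\<Sum>h\<in>carrier G. a h * b (inv\<^bsub>G\<^esub> h \<otimes>\<^bsub>G\<^esub> g)) else 0),
       one = (\<lambda>g. if g = \<one>\<^bsub>G\<^esub> then 1 else 0),
       zero = (\<lambda>_. 0),
       add = (\<lambda>a b g. a g + b g) \<rparr>"

definition jacobson_radical :: "('a, 'b) ring_scheme \<Rightarrow> 'a set" where
  "jacobson_radical R = \<Inter>{I. maximalideal I R}"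

primrec ideal_pow :: "('a, 'b) ring_scheme \<Rightarrow> 'a set \<Rightarrow> nat \<Rightarrow> 'a set" where
  "ideal_pow R I 0 = carrier R"
| "ideal_pow R I (Suc n) = ideal_prod R I (ideal_pow R I n)"

definition checkable :: "'a set \<Rightarrow> ('a, 'b) ring_scheme \<Rightarrow> bool" where
  "checkable I R \<longleftrightarrow> (\<exists>v\<in>carrier R. I = {a \<in> carrier R. v \<otimes>\<^bsub>R\<^esub> a = \<zero>\<^bsub>R\<^esub>})"

end

theory Submission
  imports Defs "HOL-Number_Theory.Number_Theory"
begin

locale GA = G: comm_group G for G :: "('g, 'c) monoid_scheme" (structure) +
  fixes A :: "('g \<Rightarrow> 'k::field) ring"
  assumes A_def: "A = group_algebra G" and finG: "finite (carrier G)"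
begin

lemma carrier_A: "carrier A = {f. \<forall>x. x \<notin> carrier G \<longrightarrow> f x = 0}"
  by (simp add: A_def group_algebra_def)
lemma mult_A: "a \<otimes>\<^bsub>A\<^esub> b = (\<lambda>g. if g \<in> carrier G
                        then (\<Sum>h\<in>carrier G. a h * b (inv h \<otimes> g)) else 0)"
  by (simp add: A_def group_algebra_def)
lemma one_A: "\<one>\<^bsub>A\<^esub> = (\<lambda>g. if g = \<one> then 1 else 0)"
  by (simp add: A_def group_algebra_def)
lemma zero_A: "\<zero>\<^bsub>A\<^esub> = (\<lambda>_. 0)"
  by (simp add: A_def group_algebra_def)
lemma add_A: "a \<oplus>\<^bsub>A\<^esub> b = (\<lambda>g. a g + b g)"
  by (simp add: A_def group_algebra_def)

lemma inA: "f \<in> carrier A \<Longrightarrow> x \<notin> carrier G \<Longrightarrow> f x = 0"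
  by (simp add: carrier_A)

lemma lmult_bij: "k \<in> carrier G \<Longrightarrow> bij_betw (\<lambda>l. k \<otimes> l) (carrier G) (carrier G)"
  by (rule bij_betwI[where g="\<lambda>l. inv k \<otimes> l"]) (auto simp: G.m_assoc[symmetric])

lemma mult_assoc_A:
  assumes a: "a \<in> carrier A" and b: "b \<in> carrier A" and c: "c \<in> carrier A"
  shows "(a \<otimes>\<^bsub>A\<^esub> b) \<otimes>\<^bsub>A\<^esub> c = a \<otimes>\<^bsub>A\<^esub> (b \<otimes>\<^bsub>A\<^esub> c)"
proof
  fix g show "((a \<otimes>\<^bsub>A\<^esub> b) \<otimes>\<^bsub>A\<^esub> c) g = (a \<otimes>\<^bsub>A\<^esub> (b \<otimes>\<^bsub>A\<^esub> c)) g"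
  proof (cases "g \<in> carrier G")
    case False thus ?thesis by (simp add: mult_A)
  next
    case gG: True
    have "((a \<otimes>\<^bsub>A\<^esub> b) \<otimes>\<^bsub>A\<^esub> c) g = (\<Sum>h\<in>carrier G. (\<Sum>k\<in>carrier G. a k * b (inv k \<otimes> h)) * c (inv h \<otimes> g))"
      using gG by (simp add: mult_A)
    also have "\<dots> = (\<Sum>k\<in>carrier G. a k * (\<Sum>h\<in>carrier G. b (inv k \<otimes> h) * c (inv h \<otimes> g)))"
      apply (simp add: sum_distrib_left sum_distrib_right mult.assoc)
      by (rule sum.swap)
    also have "\<dots> = (\<Sum>k\<in>carrier G. a k * (\<Sum>l\<in>carrier G. b l * c (inv l \<otimes> (inv k \<otimes> g))))"
    proof (rule sum.cong[OF refl])
      fix k assume kG: "k \<in> carrier G"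
      have bij: "bij_betw (\<lambda>l. k \<otimes> l) (carrier G) (carrier G)"
        using kG by (rule lmult_bij)  
      have "(\<Sum>h\<in>carrier G. b (inv k \<otimes> h) * c (inv h \<otimes> g)) = (\<Sum>l\<in>carrier G. b (inv k \<otimes> (k \<otimes> l)) * c (inv (k \<otimes> l) \<otimes> g))"
        using sum.reindex_bij_betw[OF bij, of "\<lambda>h. b (inv k \<otimes> h) * c (inv h \<otimes> g)"] by simp
      also have "\<dots> = (\<Sum>l\<in>carrier G. b l * c (inv l \<otimes> (inv k \<otimes> g)))"
        apply (rule sum.cong[OF refl])
        using kG gG by (simp add: G.m_assoc[symmetric] G.inv_mult_group)
      finally show "a k * (\<Sum>h\<in>carrier G. b (inv k \<otimes> h) * c (inv h \<otimes> g)) = a k * (\<Sum>l\<in>carrier G. b l * c (inv l \<otimes> (inv k \<otimes> g)))"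
        by simp
    qed
    also have "\<dots> = (a \<otimes>\<^bsub>A\<^esub> (b \<otimes>\<^bsub>A\<^esub> c)) g"
      using gG by (simp add: mult_A)
    finally show ?thesis .
  qed
qed

lemma inv_bij: "g \<in> carrier G \<Longrightarrow> bij_betw (\<lambda>k. inv k \<otimes> g) (carrier G) (carrier G)"
  by (rule bij_betwI[where g="\<lambda>k. inv k \<otimes> g"]) (auto simp: G.inv_mult_group G.m_ac)

lemma mult_comm_A:
  assumes a: "a \<in> carrier A" and b: "b \<in> carrier A"
  shows "a \<otimes>\<^bsub>A\<^esub> b = b \<otimes>\<^bsub>A\<^esub> a"
proof
  fix g show "(a \<otimes>\<^bsub>A\<^esub> b) g = (b \<otimes>\<^bsub>A\<^esub> a) g"
  proof (cases "g \<in> carrier G")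
    case False thus ?thesis by (simp add: mult_A)
  next
    case gG: True
    have "(\<Sum>h\<in>carrier G. a h * b (inv h \<otimes> g)) = (\<Sum>k\<in>carrier G. a (inv k \<otimes> g) * b (inv (inv k \<otimes> g) \<otimes> g))"
      using sum.reindex_bij_betw[OF inv_bij[OF gG], of "\<lambda>h. a h * b (inv h \<otimes> g)"] by simp
    also have "\<dots> = (\<Sum>k\<in>carrier G. b k * a (inv k \<otimes> g))"
      by (rule sum.cong[OF refl]) (use gG in \<open>simp add: G.inv_mult_group G.m_ac\<close>)
    finally show ?thesis using gG by (simp add: mult_A)
  qed
qed

lemma sum_if_mult: fixes c :: "'b::comm_semiring_1" assumes "finite S" "h \<in> S" shows "(\<Sum>k\<in>S. (if k = h then c else 0) * f k) = c * f h"
proof -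
  have "(\<Sum>k\<in>S. (if k = h then c else 0) * f k) = (\<Sum>k\<in>S. if k = h then c * f h else 0)"
    by (rule sum.cong) auto
  thus ?thesis using assms by (simp add: sum.delta)
qed

lemma sum_if_mult2: fixes f :: "_ \<Rightarrow> 'b::comm_semiring_1" shows "finite S \<Longrightarrow> h \<in> S \<Longrightarrow> (\<Sum>k\<in>S. f k * (if h = k then 1 else 0)) = f h"
proof -
  assume "finite S" "h \<in> S"
  have "(\<Sum>k\<in>S. f k * (if h = k then 1 else 0)) = (\<Sum>k\<in>S. if h = k then f h else 0)"
    by (rule sum.cong) auto
  thus ?thesis using \<open>finite S\<close> \<open>h \<in> S\<close> by (simp add: sum.delta)
qed

lemma one_mult_A: assumes a: "a \<in> carrier A" shows "\<one>\<^bsub>A\<^esub> \<otimes>\<^bsub>A\<^esub> a = a"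
proof
  fix g show "(\<one>\<^bsub>A\<^esub> \<otimes>\<^bsub>A\<^esub> a) g = a g"
    using a by (auto simp: mult_A one_A sum_if_mult finG inA)
qed

lemma mult_one_A: assumes a: "a \<in> carrier A" shows "a \<otimes>\<^bsub>A\<^esub> \<one>\<^bsub>A\<^esub> = a"
proof -
  have "\<one>\<^bsub>A\<^esub> \<in> carrier A" by (auto simp: one_A carrier_A)
  thus ?thesis using a one_mult_A mult_comm_A by simp
qed

lemma distr_A:
  assumes "a \<in> carrier A" "b \<in> carrier A" "c \<in> carrier A"
  shows "(a \<oplus>\<^bsub>A\<^esub> b) \<otimes>\<^bsub>A\<^esub> c = a \<otimes>\<^bsub>A\<^esub> c \<oplus>\<^bsub>A\<^esub> b \<otimes>\<^bsub>A\<^esub> c"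
  by (rule ext) (simp add: mult_A add_A sum.distrib ring_distribs)

lemma cring_A: "cring A"
proof (rule cringI)
  show "abelian_group A"
  proof (rule abelian_groupI)
    fix x assume x: "x \<in> carrier A"
    show "\<exists>y\<in>carrier A. y \<oplus>\<^bsub>A\<^esub> x = \<zero>\<^bsub>A\<^esub>"
      by (rule bexI[of _ "\<lambda>g. - x g"]) (use x in \<open>auto simp: add_A zero_A carrier_A\<close>)
  qed (auto simp: add_A zero_A carrier_A)
  show "comm_monoid A"
  proof (rule comm_monoidI)
    fix x y assume "x \<in> carrier A" "y \<in> carrier A"
    thus "x \<otimes>\<^bsub>A\<^esub> y \<in> carrier A" by (simp add: carrier_A mult_A)
  next show "\<one>\<^bsub>A\<^esub> \<in> carrier A" by (auto simp: one_A carrier_A)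
  qed (simp_all add: mult_assoc_A one_mult_A mult_comm_A)
qed (rule distr_A)

end

sublocale GA \<subseteq> A: cring A by (rule cring_A)

context GA begin

lemma a_inv_A: "a \<in> carrier A \<Longrightarrow> \<ominus>\<^bsub>A\<^esub> a = (\<lambda>g. - a g)"
  using A.minus_equality[of "\<lambda>g. - a g" a] by (auto simp: add_A zero_A carrier_A)

lemma minus_A: "a \<in> carrier A \<Longrightarrow> b \<in> carrier A \<Longrightarrow> a \<ominus>\<^bsub>A\<^esub> b = (\<lambda>g. a g - b g)"
  by (simp add: a_minus_def a_inv_A add_A)

definition delta :: "'g \<Rightarrow> 'g \<Rightarrow> 'k" where "delta h = (\<lambda>x. if x = h then 1 else 0)"
definition sc :: "'k \<Rightarrow> 'g \<Rightarrow> 'k" where "sc c = (\<lambda>x. if x = \<one> then c else 0)"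
definition sig :: "'g \<Rightarrow> 'k" where "sig = (\<lambda>x. if x \<in> carrier G then 1 else 0)"
definition eps :: "('g \<Rightarrow> 'k) \<Rightarrow> 'k" where "eps a = (\<Sum>g\<in>carrier G. a g)"

lemma delta_A[simp]: "h \<in> carrier G \<Longrightarrow> delta h \<in> carrier A"
  by (auto simp: delta_def carrier_A)
lemma sc_A[simp]: "sc c \<in> carrier A"
  by (auto simp: sc_def carrier_A)
lemma sig_A[simp]: "sig \<in> carrier A"
  by (auto simp: sig_def carrier_A)

lemma delta_mult: assumes h: "h \<in> carrier G" and a: "a \<in> carrier A"
  shows "delta h \<otimes>\<^bsub>A\<^esub> a = (\<lambda>x. if x \<in> carrier G then a (inv h \<otimes> x) else 0)"
  using h by (auto simp: mult_A delta_def sum_if_mult finG)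

lemma sc_mult: assumes a: "a \<in> carrier A"
  shows "sc c \<otimes>\<^bsub>A\<^esub> a = (\<lambda>x. c * a x)"
  using a by (auto simp: mult_A sc_def sum_if_mult finG inA)

lemma mult_sig: assumes a: "a \<in> carrier A"
  shows "a \<otimes>\<^bsub>A\<^esub> sig = (\<lambda>x. if x \<in> carrier G then eps a else 0)"
  by (auto simp: mult_A sig_def eps_def)

lemma delta_delta: "g \<in> carrier G \<Longrightarrow> h \<in> carrier G \<Longrightarrow> delta g \<otimes>\<^bsub>A\<^esub> delta h = delta (g \<otimes> h)"
  apply (rule ext)
  apply (simp add: delta_mult)
  by (auto simp: delta_def G.m_assoc[symmetric])

lemma one_delta: "\<one>\<^bsub>A\<^esub> = delta \<one>"
  by (simp add: one_A delta_def)

lemma delta_pow: "g \<in> carrier G \<Longrightarrow> delta g [^]\<^bsub>A\<^esub> (n::nat) = delta (g [^] n)"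
  by (induction n) (simp_all add: one_delta delta_delta G.nat_pow_Suc)

lemma eps_mult: assumes a: "a \<in> carrier A" and b: "b \<in> carrier A"
  shows "eps (a \<otimes>\<^bsub>A\<^esub> b) = eps a * eps b"
proof -
  have "eps (a \<otimes>\<^bsub>A\<^esub> b) = (\<Sum>g\<in>carrier G. \<Sum>h\<in>carrier G. a h * b (inv h \<otimes> g))"
    by (simp add: eps_def mult_A)
  also have "\<dots> = (\<Sum>h\<in>carrier G. a h * (\<Sum>g\<in>carrier G. b (inv h \<otimes> g)))"
    by (subst sum.swap) (simp add: sum_distrib_left)
  also have "\<dots> = (\<Sum>h\<in>carrier G. a h * eps b)"
  proof (rule sum.cong[OF refl])
    fix h assume h: "h \<in> carrier G"
    show "a h * (\<Sum>g\<in>carrier G. b (inv h \<otimes> g)) = a h * eps b"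
      using sum.reindex_bij_betw[OF lmult_bij[of "inv h"], of b] h by (simp add: eps_def)
  qed
  finally show ?thesis by (simp add: eps_def sum_distrib_right)
qed

lemma eps_add: "eps (a \<oplus>\<^bsub>A\<^esub> b) = eps a + eps b"
  by (simp add: eps_def add_A sum.distrib)
lemma eps_minus: "a \<in> carrier A \<Longrightarrow> b \<in> carrier A \<Longrightarrow> eps (a \<ominus>\<^bsub>A\<^esub> b) = eps a - eps b"
  by (simp add: eps_def minus_A sum_subtractf)
lemma eps_sc: "eps (sc c) = c"
  using finG by (simp add: eps_def sc_def)
lemma eps_delta: "g \<in> carrier G \<Longrightarrow> eps (delta g) = 1"
  using finG by (simp add: eps_def delta_def)
lemma eps_one: "eps \<one>\<^bsub>A\<^esub> = 1"
  by (simp add: one_delta eps_delta)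

lemma finsum_eval: assumes "finite S" "f \<in> S \<rightarrow> carrier A"
  shows "finsum A f S x = (\<Sum>s\<in>S. f s x)"
  using assms
proof (induction S rule: finite_induct)
  case empty thus ?case by (simp add: zero_A)
next
  case (insert s S) thus ?case by (simp add: A.finsum_insert add_A)
qed

lemma decomp: assumes a: "a \<in> carrier A"
  shows "a = (\<Oplus>\<^bsub>A\<^esub>g\<in>carrier G. sc (a g) \<otimes>\<^bsub>A\<^esub> delta g)"
proof
  fix x
  have "(\<Oplus>\<^bsub>A\<^esub>g\<in>carrier G. sc (a g) \<otimes>\<^bsub>A\<^esub> delta g) x = (\<Sum>g\<in>carrier G. a g * delta g x)"
    by (subst finsum_eval) (auto simp: finG sc_mult)
  also have "\<dots> = a x" using a finG by (cases "x \<in> carrier G") (auto simp: delta_def inA sum_if_mult2 intro!: sum.neutral)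
  finally show "a x = (\<Oplus>\<^bsub>A\<^esub>g\<in>carrier G. sc (a g) \<otimes>\<^bsub>A\<^esub> delta g) x" by simp
qed

end

lemma binom_alt_step:
  fixes f :: "nat \<Rightarrow> 'a::comm_ring_1"
  shows "(\<Sum>j\<le>Suc k. f j * ((-1)^j * of_nat (Suc k choose j)))
       = (\<Sum>j\<le>k. f j * ((-1)^j * of_nat (k choose j))) - (\<Sum>j\<le>k. f (Suc j) * ((-1)^j * of_nat (k choose j)))"
proof -
  have "(\<Sum>j\<le>Suc k. f j * ((-1)^j * of_nat (Suc k choose j)))
      = f 0 + (\<Sum>j\<le>k. f (Suc j) * ((-1)^(Suc j) * of_nat (Suc k choose Suc j)))"
    by (subst sum.atMost_Suc_shift) simp
  also have "\<dots> = f 0 + (\<Sum>j\<le>k. f (Suc j) * ((-1)^(Suc j) * of_nat (k choose Suc j)))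
                - (\<Sum>j\<le>k. f (Suc j) * ((-1)^j * of_nat (k choose j)))"
  proof -
    have "\<And>j. f (Suc j) * ((-1)^(Suc j) * of_nat (Suc k choose Suc j)) = f (Suc j) * ((-1)^(Suc j) * of_nat (k choose Suc j)) - f (Suc j) * ((-1)^j * of_nat (k choose j))"
      by (simp add: algebra_simps)
    hence "(\<Sum>j\<le>k. f (Suc j) * ((-1)^(Suc j) * of_nat (Suc k choose Suc j))) = (\<Sum>j\<le>k. f (Suc j) * ((-1)^(Suc j) * of_nat (k choose Suc j)) - f (Suc j) * ((-1)^j * of_nat (k choose j)))"
      by (rule sum.cong[OF refl])
    thus ?thesis by (simp add: sum_subtractf)
  qed
  also have "f 0 + (\<Sum>j\<le>k. f (Suc j) * ((-1)^(Suc j) * of_nat (k choose Suc j)))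
           = (\<Sum>j\<le>k. f j * ((-1)^j * of_nat (k choose j)))"
  proof (cases k)
    case 0 thus ?thesis by simp
  next
    case (Suc k')
    have "(\<Sum>j\<le>k. f j * ((-1)^j * of_nat (k choose j)))
        = f 0 + (\<Sum>j\<le>k'. f (Suc j) * ((-1)^(Suc j) * of_nat (k choose Suc j)))"
      unfolding Suc by (subst sum.atMost_Suc_shift) simp
    also have "(\<Sum>j\<le>k'. f (Suc j) * ((-1)^(Suc j) * of_nat (k choose Suc j)))
       = (\<Sum>j\<le>k. f (Suc j) * ((-1)^(Suc j) * of_nat (k choose Suc j)))"
      unfolding Suc by (simp add: binomial_eq_0)
    finally show ?thesis by simp
  qed
  finally show ?thesis by simp
qed

locale GAp = GA G A for G (structure) and A :: "('g \<Rightarrow> 'k::field) ring" +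
  fixes p :: nat
  assumes prime_p: "prime p" and charp: "of_nat p = (0::'k)"
    and exp_p: "\<forall>x\<in>carrier G. x [^] p = \<one>"
begin

definition y :: "'g \<Rightarrow> 'g \<Rightarrow> 'k" where "y g = \<one>\<^bsub>A\<^esub> \<ominus>\<^bsub>A\<^esub> delta g"

lemma y_A[simp]: "g \<in> carrier G \<Longrightarrow> y g \<in> carrier A"
  by (simp add: y_def)

definition ypw :: "'g \<Rightarrow> nat \<Rightarrow> 'g \<Rightarrow> 'k" where
  "ypw g k = (\<lambda>x. if x \<in> carrier G then (\<Sum>j\<le>k. (if x = g [^] j then 1 else 0) * ((-1)^j * of_nat (k choose j))) else 0)"

lemma ypw_A: "ypw g k \<in> carrier A"
  by (simp add: ypw_def carrier_A)

lemma y_pow: assumes g: "g \<in> carrier G" shows "y g [^]\<^bsub>A\<^esub> k = ypw g k"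
proof (induction k)
  case 0
  show ?case by (rule ext) (auto simp: ypw_def one_A)
next
  case (Suc k)
  have "y g [^]\<^bsub>A\<^esub> Suc k = ypw g k \<otimes>\<^bsub>A\<^esub> (\<one>\<^bsub>A\<^esub> \<ominus>\<^bsub>A\<^esub> delta g)"
    using Suc by (simp add: y_def)
  also have "\<dots> = ypw g k \<ominus>\<^bsub>A\<^esub> delta g \<otimes>\<^bsub>A\<^esub> ypw g k"
    using g ypw_A by (simp add: a_minus_def A.r_distr A.r_minus A.l_minus A.m_comm)
  also have "\<dots> = ypw g (Suc k)"
  proof
    fix x
    have mx: "(ypw g k \<ominus>\<^bsub>A\<^esub> delta g \<otimes>\<^bsub>A\<^esub> ypw g k) x = ypw g k x - (delta g \<otimes>\<^bsub>A\<^esub> ypw g k) x"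
      using g ypw_A by (simp add: minus_A)
    have "ypw g k x - (delta g \<otimes>\<^bsub>A\<^esub> ypw g k) x = ypw g (Suc k) x"
    proof (cases "x \<in> carrier G")
      case False thus ?thesis using g ypw_A by (simp add: delta_mult ypw_def)
    next
      case True
      have e: "\<And>j. (inv g \<otimes> x = g [^] j) = (x = g [^] Suc j)"
        using g True by (metis G.inv_solve_left G.nat_pow_Suc2 G.nat_pow_closed)
      define F where "F = (\<lambda>j::nat. if x = g [^] j then 1 else (0::'k))"
      have 1: "ypw g (Suc k) x = (\<Sum>j\<le>Suc k. F j * ((-1)^j * of_nat (Suc k choose j)))"
        unfolding ypw_def F_def using True by (simp only: if_P)
      have 2: "ypw g k x = (\<Sum>j\<le>k. F j * ((-1)^j * of_nat (k choose j)))"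
        unfolding ypw_def F_def using True by (simp only: if_P)
      have 3: "(delta g \<otimes>\<^bsub>A\<^esub> ypw g k) x = (\<Sum>j\<le>k. F (Suc j) * ((-1)^j * of_nat (k choose j)))"
      proof -
        have "(delta g \<otimes>\<^bsub>A\<^esub> ypw g k) x = ypw g k (inv g \<otimes> x)"
          using g True ypw_A by (simp add: delta_mult)
        also have "\<dots> = (\<Sum>j\<le>k. (if inv g \<otimes> x = g [^] j then 1 else 0) * ((-1)^j * of_nat (k choose j)))"
          unfolding ypw_def using True g by (simp only: if_P G.m_closed G.inv_closed)
        also have "\<dots> = (\<Sum>j\<le>k. F (Suc j) * ((-1)^j * of_nat (k choose j)))"
          unfolding F_def e ..
        finally show ?thesis .
      qed
      show ?thesis unfolding 1 2 3 binom_alt_step ..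
    qed
    thus "(ypw g k \<ominus>\<^bsub>A\<^esub> delta g \<otimes>\<^bsub>A\<^esub> ypw g k) x = ypw g (Suc k) x" using mx by simp
  qed
  finally show ?case .
qed

lemma neg1_choose: "j \<le> p - 1 \<Longrightarrow> (-1)^j * of_nat ((p - 1) choose j) = (1::'k)"
proof (induction j)
  case 0 thus ?case by simp
next
  case (Suc j)
  have p: "p = Suc (p - 1)" using prime_p prime_gt_0_nat by simp
  have "p dvd (p choose Suc j)"
    using Suc.prems prime_p by (intro dvd_choose_prime) auto
  hence "of_nat (p choose Suc j) = (0::'k)" using charp
    by (metis dvd_def mult_zero_left of_nat_mult)
  moreover have "p choose Suc j = (p - 1 choose j) + (p - 1 choose Suc j)"
    by (subst p) simp
  ultimately have "of_nat ((p - 1) choose Suc j) = - (of_nat ((p - 1) choose j) :: 'k)"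
    by (simp add: eq_neg_iff_add_eq_0 add.commute)
  thus ?case using Suc by simp
qed

lemma neg1_p: "(-1::'k)^p = -1"
proof (cases "p = 2")
  case True
  have "(2::'k) = 0" using charp True by simp
  hence "(1::'k) = -1" by (simp add: eq_neg_iff_add_eq_0)
  thus ?thesis using True by simp
next
  case False
  hence "odd p" using prime_p prime_ge_2_nat[of p] prime_odd_nat[of p] by auto
  thus ?thesis by simp
qed

definition s :: "'g \<Rightarrow> 'g \<Rightarrow> 'k" where
  "s g = (\<lambda>x. if x \<in> carrier G then (\<Sum>j<p. if x = g [^] j then 1 else 0) else 0)"

lemma y_pow_pm1: assumes g: "g \<in> carrier G" shows "y g [^]\<^bsub>A\<^esub> (p - 1) = s g"
proof -
  have p: "{..p-1} = {..<p}" using prime_gt_0_nat[OF prime_p] by auto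
  have e: "\<And>x. (\<Sum>j\<le>p-1. (if x = g [^] j then 1 else 0) * ((-1)^j * of_nat ((p-1) choose j)))
      = (\<Sum>j<p. if x = g [^] j then 1 else (0::'k))"
    unfolding p[symmetric] by (rule sum.cong[OF refl]) (simp add: neg1_choose[simplified])
  show ?thesis
    unfolding y_pow[OF g] ypw_def s_def e ..
qed

lemma y_pow_p: assumes g: "g \<in> carrier G" shows "y g [^]\<^bsub>A\<^esub> p = \<zero>\<^bsub>A\<^esub>"
proof -
  have p1: "p > 1" using prime_p prime_gt_1_nat by blast
  have gp: "g [^] p = \<one>" using exp_p g by blast
  { fix x assume x: "x \<in> carrier G"
    have "(\<Sum>j\<le>p. (if x = g [^] j then 1 else 0) * ((-1)^j * of_nat (p choose j)))
        = (\<Sum>j\<in>{0,p}. (if x = g [^] j then 1 else 0) * ((-1)^j * of_nat (p choose j)) :: 'k)"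
    proof (rule sum.mono_neutral_right)
      show "\<forall>i\<in>{..p} - {0, p}. (if x = g [^] i then 1 else 0) * ((- 1) ^ i * of_nat (p choose i)) = (0::'k)"
      proof
        fix i assume i: "i \<in> {..p} - {0, p}"
        have "p dvd (p choose i)" using i prime_p by (intro dvd_choose_prime) auto
        hence "of_nat (p choose i) = (0::'k)" using charp
          by (metis dvd_def mult_zero_left of_nat_mult)
        thus "(if x = g [^] i then 1 else 0) * ((- 1) ^ i * of_nat (p choose i)) = (0::'k)" by simp
      qed
    qed auto
    also have "\<dots> = 0" using p1 gp by (simp add: neg1_p)
    finally have "(\<Sum>j\<le>p. (if x = g [^] j then 1 else 0) * ((-1)^j * of_nat (p choose j))) = (0::'k)" .
  }
  thus ?thesis unfolding y_pow[OF g] ypw_def zero_A by auto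
qed

end

locale EAG = comm_group G for G :: "('g, 'c) monoid_scheme" (structure) +
  fixes p :: nat
  assumes prime_p: "prime p" and expo: "\<forall>x\<in>carrier G. x [^] p = \<one>"
begin

definition phi :: "(nat \<Rightarrow> 'g) \<Rightarrow> nat \<Rightarrow> (nat \<Rightarrow> nat) \<Rightarrow> 'g" where
  "phi g k a = (\<Otimes>i\<in>{..<k}. g i [^] a i)"

definition E :: "nat \<Rightarrow> (nat \<Rightarrow> nat) set" where
  "E k = PiE {..<k} (\<lambda>_. {..<p})"

lemma p_gt1: "p > 1" using prime_p prime_gt_1_nat by blast

lemma pow_mod: assumes x: "x \<in> carrier G" shows "x [^] (n::nat) = x [^] (n mod p)"
proof -
  have "x [^] n = x [^] (p * (n div p)) \<otimes> x [^] (n mod p)"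
    using x by (simp add: nat_pow_mult)
  also have "x [^] (p * (n div p)) = \<one>"
    using x expo by (simp add: nat_pow_pow[symmetric])
  finally show ?thesis using x by simp
qed

lemma phi_closed: "\<forall>i. g i \<in> carrier G \<Longrightarrow> phi g k a \<in> carrier G"
  by (auto simp: phi_def)

lemma phi_mult:
  assumes g: "\<forall>i. g i \<in> carrier G"
  shows "phi g k a \<otimes> phi g k b = phi g k (\<lambda>i\<in>{..<k}. (a i + b i) mod p)"
proof -
  have "phi g k a \<otimes> phi g k b = (\<Otimes>i\<in>{..<k}. g i [^] a i \<otimes> g i [^] b i)"
    using g by (simp add: phi_def)
  also have "\<dots> = phi g k (\<lambda>i\<in>{..<k}. (a i + b i) mod p)"
    unfolding phi_def
  proof (rule finprod_cong')
    fix i assume "i \<in> {..<k}"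
    thus "g i [^] a i \<otimes> g i [^] b i = g i [^] (\<lambda>i\<in>{..<k}. (a i + b i) mod p) i"
      using g by (simp add: nat_pow_mult) (rule pow_mod, simp)
  qed (use g in auto)
  finally show ?thesis .
qed

lemma E_mod: "(\<lambda>i\<in>{..<k}. (n i) mod p) \<in> E k"
  using p_gt1 by (auto simp: E_def)

lemma one_in_H: "\<forall>i. g i \<in> carrier G \<Longrightarrow> \<one> \<in> phi g k ` E k"
proof -
  assume g: "\<forall>i. g i \<in> carrier G"
  have "phi g k (\<lambda>i\<in>{..<k}. 0 mod p) = \<one>"
    unfolding phi_def by (rule finprod_one_eqI) simp
  thus ?thesis using E_mod[of "\<lambda>_. 0" k] by (metis image_eqI)
qed

lemma H_mult: "\<forall>i. g i \<in> carrier G \<Longrightarrow> x \<in> phi g k ` E k \<Longrightarrow> z \<in> phi g k ` E k \<Longrightarrow> x \<otimes> z \<in> phi g k ` E k"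
proof -
  assume g: "\<forall>i. g i \<in> carrier G" and "x \<in> phi g k ` E k" "z \<in> phi g k ` E k"
  then obtain a b where "x = phi g k a" "z = phi g k b" by blast
  hence "x \<otimes> z = phi g k (\<lambda>i\<in>{..<k}. (a i + b i) mod p)" using phi_mult[OF g] by simp
  thus ?thesis using E_mod[of "\<lambda>i. a i + b i" k] by blast
qed

lemma H_pow: "\<forall>i. g i \<in> carrier G \<Longrightarrow> x \<in> phi g k ` E k \<Longrightarrow> x [^] (n::nat) \<in> phi g k ` E k"
  by (induction n) (simp_all add: one_in_H H_mult)

lemma H_inv: assumes g: "\<forall>i. g i \<in> carrier G" and x: "x \<in> phi g k ` E k"
  shows "inv x \<in> phi g k ` E k"
proof -
  have xc: "x \<in> carrier G" using x phi_closed[OF g] by auto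
  have "x [^] (p - 1) \<otimes> x = \<one>"
  proof -
    have "x [^] (p - 1) \<otimes> x = x [^] Suc (p - 1)" by simp
    also have "Suc (p - 1) = p" using p_gt1 by simp
    finally show ?thesis using xc expo by simp
  qed
  hence "inv x = x [^] (p - 1)" using xc by (simp add: inv_equality)
  thus ?thesis using H_pow[OF g x] by simp
qed

lemma step_inj:
  assumes g: "\<forall>i. g i \<in> carrier G" and inj: "inj_on (phi g k) (E k)"
    and h: "h \<in> carrier G" and hH: "h \<notin> phi g k ` E k"
  shows "inj_on (phi (g(k := h)) (Suc k)) (E (Suc k))"
proof (rule inj_onI)
  let ?g = "g(k := h)"
  have g': "\<forall>i. ?g i \<in> carrier G" using g h by auto
  have split: "phi ?g (Suc k) a = phi g k a \<otimes> h [^] a k" for a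
  proof -
    have "phi ?g (Suc k) a = ?g k [^] a k \<otimes> phi ?g k a"
      unfolding phi_def lessThan_Suc by (rule finprod_insert) (use g' h in auto)
    also have "phi ?g k a = phi g k a"
      unfolding phi_def by (rule finprod_cong') (use g in auto)
    finally show ?thesis using g h phi_closed[OF g] by (simp add: m_comm fun_upd_def)
  qed
  have restr: "phi g k a = phi g k (restrict a {..<k})" for a
    unfolding phi_def by (rule finprod_cong') (use g in auto)
  have restrE: "a \<in> E (Suc k) \<Longrightarrow> restrict a {..<k} \<in> E k" for a
    by (simp add: E_def Pi_def PiE_iff)
  have main: "a k = b k" if a: "a \<in> E (Suc k)" and b: "b \<in> E (Suc k)"
     and eq: "phi g k a \<otimes> h [^] a k = phi g k b \<otimes> h [^] b k" and lt: "a k < b k" for a b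
  proof -
    define d where "d = b k - a k"
    have "b k < p" using b by (simp add: E_def PiE_iff)
    hence d: "0 < d" "d < p" using lt by (auto simp: d_def)
    have "phi g k a \<otimes> h [^] a k = (phi g k b \<otimes> h [^] d) \<otimes> h [^] a k"
      using eq lt h phi_closed[OF g] by (simp add: d_def m_assoc nat_pow_mult add.commute)
    hence "phi g k a = phi g k b \<otimes> h [^] d"
      using h phi_closed[OF g] by simp
    hence "h [^] d = inv (phi g k b) \<otimes> phi g k a"
      using h phi_closed[OF g] by (simp add: m_assoc[symmetric])
    moreover have "phi g k a \<in> phi g k ` E k" using restrE[OF a] restr by auto
    moreover have "phi g k b \<in> phi g k ` E k" using restrE[OF b] restr by auto
    ultimately have hd: "h [^] d \<in> phi g k ` E k" using H_mult[OF g] H_inv[OF g] by simp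
    have "coprime d p" using d prime_p
    proof -
      have "\<not> p dvd d" using d by (auto dest: dvd_imp_le)
      hence "coprime p d" by (rule prime_imp_coprime[OF prime_p])
      thus ?thesis by (simp add: coprime_commute)
    qed
    then obtain d' where d': "[d * d' = Suc 0] (mod p)" using cong_solve_coprime_nat by blast
    have "(d * d') mod p = 1"
      using d' p_gt1 by (simp add: cong_def)
    hence "h = h [^] ((d * d') mod p)" using h by simp
    also have "\<dots> = h [^] (d * d')" using h by (rule pow_mod[symmetric])
    also have "\<dots> = (h [^] d) [^] d'" using h by (simp add: nat_pow_pow)
    finally have hh: "h = (h [^] d) [^] d'" .
    have "h \<in> phi g k ` E k" using H_pow[OF g hd, of d'] hh[symmetric] by simp
    thus ?thesis using hH by blast
  qed
  fix a b assume a: "a \<in> E (Suc k)" and b: "b \<in> E (Suc k)" and eq0: "phi ?g (Suc k) a = phi ?g (Suc k) b"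
  hence eq: "phi g k a \<otimes> h [^] a k = phi g k b \<otimes> h [^] b k" by (simp add: split)
  have akbk: "a k = b k"
    using main[OF a b eq] main[OF b a eq[symmetric]] by (metis nat_neq_iff)
  hence pab: "phi g k a = phi g k b" using eq h phi_closed[OF g] by simp
  have "restrict a {..<k} = restrict b {..<k}"
    by (rule inj_onD[OF inj]) (use restrE[OF a] restrE[OF b] restr pab in auto)
  hence "\<And>i. i \<in> {..<Suc k} \<Longrightarrow> a i = b i" using akbk
  proof -
    fix i assume i: "i \<in> {..<Suc k}"
    show "a i = b i"
    proof (cases "i < k")
      case True
      thus ?thesis using fun_cong[OF \<open>restrict a {..<k} = restrict b {..<k}\<close>, of i] by simp
    next
      case False thus ?thesis using i akbk by (simp add: less_Suc_eq)
    qed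
  qed
  thus "a = b" using a b unfolding E_def by (rule PiE_ext[rotated 2])
qed

lemma card_E: "card (E k) = p ^ k"
  by (simp add: E_def card_PiE)

lemma finite_E: "finite (E k)"
  by (simp add: E_def finite_PiE)

lemma basis_ind:
  assumes fin: "finite (carrier G)" and card: "card (carrier G) = p ^ m"
  shows "k \<le> m \<Longrightarrow> \<exists>g. (\<forall>i. g i \<in> carrier G) \<and> inj_on (phi g k) (E k)"
proof (induction k)
  case 0
  have "E 0 = {\<lambda>_. undefined}" by (simp add: E_def)
  thus ?case by (intro exI[of _ "\<lambda>_. \<one>"]) auto
next
  case (Suc k)
  then obtain g where g: "\<forall>i. g i \<in> carrier G" and inj: "inj_on (phi g k) (E k)" by auto
  have "card (phi g k ` E k) = p ^ k" using inj card_E by (simp add: card_image)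
  also have "\<dots> < p ^ m" using Suc.prems p_gt1 by (simp add: power_strict_increasing)
  finally have "card (phi g k ` E k) < card (carrier G)" using card by simp
  moreover have "phi g k ` E k \<subseteq> carrier G" using phi_closed[OF g] by auto
  moreover have "\<not> carrier G \<subseteq> phi g k ` E k"
  proof
    assume "carrier G \<subseteq> phi g k ` E k"
    hence "card (carrier G) \<le> card (phi g k ` E k)" by (rule card_mono[OF finite_imageI[OF finite_E]])
    thus False using calculation by simp
  qed
  ultimately obtain h where h: "h \<in> carrier G" "h \<notin> phi g k ` E k" by blast
  have "\<forall>i. (g(k:=h)) i \<in> carrier G" using g h(1) by auto
  thus ?case using step_inj[OF g inj h] by blast
qed

lemma basis_exists:
  assumes fin: "finite (carrier G)" and card: "card (carrier G) = p ^ m"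
  shows "\<exists>g. (\<forall>i. g i \<in> carrier G) \<and> bij_betw (phi g m) (E m) (carrier G)"
proof -
  obtain g where g: "\<forall>i. g i \<in> carrier G" and inj: "inj_on (phi g m) (E m)"
    using basis_ind[OF fin card, of m] by auto
  have sub: "phi g m ` E m \<subseteq> carrier G" using phi_closed[OF g] by auto
  have "card (phi g m ` E m) = card (carrier G)" using inj card_E card by (simp add: card_image)
  hence "phi g m ` E m = carrier G" using sub fin by (simp add: card_subset_eq)
  thus ?thesis using g inj by (auto simp: bij_betw_def)
qed

end

context GAp begin

lemma y_eval: assumes g: "g \<in> carrier G" shows "y g x = (if x = \<one> then 1 else 0) - (if x = g then 1 else 0)"
proof -
  have "y g x = \<one>\<^bsub>A\<^esub> x - delta g x" unfolding y_def using g by (simp add: minus_A)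
  thus ?thesis by (simp add: one_A delta_def)
qed

lemma eps_y: "g \<in> carrier G \<Longrightarrow> eps (y g) = 0"
  by (simp add: y_def eps_minus eps_one eps_delta)

definition Iaug :: "('g \<Rightarrow> 'k) set" where "Iaug = {a \<in> carrier A. eps a = 0}"

lemma y_Iaug: "g \<in> carrier G \<Longrightarrow> y g \<in> Iaug"
  by (simp add: Iaug_def eps_y)

lemma eps_zero: "eps \<zero>\<^bsub>A\<^esub> = 0"
  by (simp add: eps_def zero_A)

lemma Iaug_decomp: assumes a: "a \<in> Iaug"
  shows "a = (\<Oplus>\<^bsub>A\<^esub>g\<in>carrier G. sc (- a g) \<otimes>\<^bsub>A\<^esub> y g)"
proof
  fix x
  have aA: "a \<in> carrier A" and ea: "eps a = 0" using a by (auto simp: Iaug_def)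
  have "(\<Oplus>\<^bsub>A\<^esub>g\<in>carrier G. sc (- a g) \<otimes>\<^bsub>A\<^esub> y g) x
      = (\<Sum>g\<in>carrier G. - a g * ((if x = \<one> then 1 else 0) - (if x = g then 1 else 0)))"
    by (subst finsum_eval) (auto simp: finG sc_mult y_eval)
  also have "\<dots> = (\<Sum>g\<in>carrier G. a g * (if x = g then 1 else 0)) - (if x = \<one> then 1 else 0) * eps a"
    by (simp add: eps_def algebra_simps sum_subtractf sum_distrib_left sum_distrib_right sum_negf)
  also have "\<dots> = a x"
    using aA ea finG by (cases "x \<in> carrier G") (auto simp: inA sum_if_mult2[of _ x] intro!: sum.neutral)
  finally show "a x = (\<Oplus>\<^bsub>A\<^esub>g\<in>carrier G. sc (- a g) \<otimes>\<^bsub>A\<^esub> y g) x" by simp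
qed

lemma Iaug_sub:
  assumes S: "S \<subseteq> carrier A" "\<zero>\<^bsub>A\<^esub> \<in> S" "\<And>u v. u \<in> S \<Longrightarrow> v \<in> S \<Longrightarrow> u \<oplus>\<^bsub>A\<^esub> v \<in> S"
    "\<And>c u. u \<in> S \<Longrightarrow> sc c \<otimes>\<^bsub>A\<^esub> u \<in> S" and yS: "\<And>g. g \<in> carrier G \<Longrightarrow> y g \<in> S"
  shows "Iaug \<subseteq> S"
proof
  fix a assume a: "a \<in> Iaug"
  have fs: "finite F \<Longrightarrow> F \<subseteq> carrier G \<Longrightarrow> (\<Oplus>\<^bsub>A\<^esub>g\<in>F. sc (- a g) \<otimes>\<^bsub>A\<^esub> y g) \<in> S" for F
  proof (induction F rule: finite_induct)
    case empty thus ?case using S by simp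
  next
    case (insert g F)
    have "(\<Oplus>\<^bsub>A\<^esub>g\<in>insert g F. sc (- a g) \<otimes>\<^bsub>A\<^esub> y g) = sc (- a g) \<otimes>\<^bsub>A\<^esub> y g \<oplus>\<^bsub>A\<^esub> (\<Oplus>\<^bsub>A\<^esub>g\<in>F. sc (- a g) \<otimes>\<^bsub>A\<^esub> y g)"
      using insert by (subst A.finsum_insert) auto
    thus ?case using insert S yS by simp
  qed
  from fs[OF finG subset_refl] show "a \<in> S" by (simp only: Iaug_decomp[OF a, symmetric])
qed

lemma Iaug_ideal: "ideal Iaug A"
proof (rule idealI)
  show "ring A" by (rule A.ring_axioms)
  show "subgroup Iaug (add_monoid A)"
  proof (rule A.add.subgroupI)
    show "Iaug \<subseteq> carrier A" by (auto simp: Iaug_def)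
    show "Iaug \<noteq> {}" using eps_zero by (auto simp: Iaug_def)
    fix a b assume a: "a \<in> Iaug" and b: "b \<in> Iaug"
    show "\<ominus>\<^bsub>A\<^esub> a \<in> Iaug"
      using a by (simp add: Iaug_def a_inv_A eps_def sum_negf carrier_A)
    show "a \<oplus>\<^bsub>A\<^esub> b \<in> Iaug"
      using a b by (simp add: Iaug_def eps_add)
  qed
next
  fix a x assume a: "a \<in> Iaug" and x: "x \<in> carrier A"
  show "x \<otimes>\<^bsub>A\<^esub> a \<in> Iaug" using a x by (simp add: Iaug_def eps_mult)
  show "a \<otimes>\<^bsub>A\<^esub> x \<in> Iaug" using a x by (simp add: Iaug_def eps_mult)
qed

lemma Iaug_maximal: "maximalideal Iaug A"
proof (rule maximalidealI)
  show "ideal Iaug A" by (rule Iaug_ideal)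
  show "carrier A \<noteq> Iaug"
  proof
    assume "carrier A = Iaug"
    hence "\<one>\<^bsub>A\<^esub> \<in> Iaug" using A.one_closed by simp
    thus False using eps_one by (simp add: Iaug_def)
  qed
  fix K assume K: "ideal K A" "Iaug \<subseteq> K" "K \<subseteq> carrier A"
  show "K = Iaug \<or> K = carrier A"
  proof (cases "K \<subseteq> Iaug")
    case True thus ?thesis using K by blast
  next
    case False
    then obtain a where aK: "a \<in> K" and aI: "a \<notin> Iaug" by blast
    have aA: "a \<in> carrier A" using aK K by blast
    hence ea: "eps a \<noteq> 0" using aI by (auto simp: Iaug_def)
    define u where "u = sc (inverse (eps a)) \<otimes>\<^bsub>A\<^esub> a"
    have uK: "u \<in> K" unfolding u_def using K aK by (simp add: ideal.I_l_closed)
    have uA: "u \<in> carrier A" unfolding u_def using aA by simp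
    have "\<one>\<^bsub>A\<^esub> \<ominus>\<^bsub>A\<^esub> u \<in> Iaug"
      using uA ea aA by (simp add: Iaug_def eps_minus eps_one u_def eps_mult eps_sc)
    hence "\<one>\<^bsub>A\<^esub> \<ominus>\<^bsub>A\<^esub> u \<in> K" using K by blast
    hence "(\<one>\<^bsub>A\<^esub> \<ominus>\<^bsub>A\<^esub> u) \<oplus>\<^bsub>A\<^esub> u \<in> K" using uK K(1) by (simp add: ideal.axioms(1) additive_subgroup.a_closed)
    moreover have "(\<one>\<^bsub>A\<^esub> \<ominus>\<^bsub>A\<^esub> u) \<oplus>\<^bsub>A\<^esub> u = \<one>\<^bsub>A\<^esub>" using uA
      by (simp add: a_minus_def A.a_assoc A.l_neg)
    ultimately have "\<one>\<^bsub>A\<^esub> \<in> K" by simp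
    thus ?thesis using K(1) by (simp add: ideal.one_imp_carrier)
  qed
qed

lemma prime_pow: assumes P: "primeideal P A" and a: "a \<in> carrier A"
  shows "a [^]\<^bsub>A\<^esub> (n::nat) \<in> P \<Longrightarrow> a \<in> P"
proof (induction n)
  case 0
  hence "\<one>\<^bsub>A\<^esub> \<in> P" by simp
  hence "P = carrier A" using P by (simp add: primeideal.axioms(1) ideal.one_imp_carrier)
  thus ?case using P a by (simp add: primeideal.I_notcarr)
next
  case (Suc n)
  hence "a [^]\<^bsub>A\<^esub> n \<otimes>\<^bsub>A\<^esub> a \<in> P" by simp
  thus ?case using primeideal.I_prime[OF P, of "a [^]\<^bsub>A\<^esub> n" a] a Suc by auto
qed

lemma maximal_contains: assumes M: "maximalideal Mx A" shows "Iaug \<subseteq> Mx"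
proof -
  have P: "primeideal Mx A" using M by (rule A.maximalideal_prime)
  have I: "ideal Mx A" using M by (simp add: maximalideal.axioms(1))
  show ?thesis
  proof (rule Iaug_sub)
    show "Mx \<subseteq> carrier A" using I by (simp add: ideal.Icarr subsetI)
    show "\<zero>\<^bsub>A\<^esub> \<in> Mx" using I by (simp add: additive_subgroup.zero_closed ideal.axioms(1))
    show "\<And>u v. u \<in> Mx \<Longrightarrow> v \<in> Mx \<Longrightarrow> u \<oplus>\<^bsub>A\<^esub> v \<in> Mx"
      using I by (simp add: additive_subgroup.a_closed ideal.axioms(1))
    show "\<And>c u. u \<in> Mx \<Longrightarrow> sc c \<otimes>\<^bsub>A\<^esub> u \<in> Mx"
      using I by (simp add: ideal.I_l_closed)
    fix g assume g: "g \<in> carrier G"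
    have "y g [^]\<^bsub>A\<^esub> p \<in> Mx" using y_pow_p[OF g] I by (simp add: additive_subgroup.zero_closed ideal.axioms(1))
    thus "y g \<in> Mx" using prime_pow[OF P] g by simp
  qed
qed

lemma jacobson_eq: "jacobson_radical A = Iaug"
  unfolding jacobson_radical_def using Iaug_maximal maximal_contains by blast

end

lemma (in cring) ideal_pow_ideal: "ideal I R \<Longrightarrow> ideal (ideal_pow R I k) R"
  by (induction k) (simp_all add: oneideal ideal_prod_is_ideal)

lemma (in cring) ideal_pow_carrier: "ideal I R \<Longrightarrow> ideal_pow R I k \<subseteq> carrier R"
  by (rule subsetI, erule ideal.Icarr[OF ideal_pow_ideal])

lemma (in cring) ideal_pow_mult:
  assumes I: "ideal I R"
  shows "x \<in> ideal_pow R I a \<Longrightarrow> z \<in> ideal_pow R I b \<Longrightarrow> x \<otimes> z \<in> ideal_pow R I (a + b)"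
proof (induction a arbitrary: x)
  case 0
  thus ?case using ideal.I_l_closed[OF ideal_pow_ideal[OF I, of b]] by simp
next
  case (Suc a)
  have zc: "z \<in> carrier R" using subsetD[OF ideal_pow_carrier[OF I] Suc.prems(2)] .
  from Suc.prems(1) have "x \<in> ideal_prod R I (ideal_pow R I a)" by simp
  thus ?case
  proof (induction x rule: ideal_prod.induct)
    case (prod i j)
    have ic: "i \<in> carrier R" using ideal.Icarr[OF I prod(1)] .
    have jc: "j \<in> carrier R" using subsetD[OF ideal_pow_carrier[OF I] prod(2)] .
    have "j \<otimes> z \<in> ideal_pow R I (a + b)" using Suc.IH[OF prod(2) Suc.prems(2)] .
    hence "i \<otimes> (j \<otimes> z) \<in> ideal_prod R I (ideal_pow R I (a + b))" using prod(1) by (rule ideal_prod.prod[rotated])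
    thus ?case using ic jc zc by (simp add: m_assoc)
  next
    case (sum s1 s2)
    have "s1 \<in> carrier R" "s2 \<in> carrier R"
      using subsetD[OF ideal_prod_in_carrier[OF I ideal_pow_ideal[OF I]] sum.hyps(1)]
        subsetD[OF ideal_prod_in_carrier[OF I ideal_pow_ideal[OF I]] sum.hyps(2)] by auto
    thus ?case using sum zc by (simp add: l_distr ideal_prod.sum)
  qed
qed

locale MLoc = GAp G A p + EAG G p for G :: "('g, 'c) monoid_scheme" (structure)
  and A :: "('g \<Rightarrow> 'k::field) ring" and p +
  fixes m :: nat
  assumes cardG: "card (carrier G) = p ^ m" and m2: "m \<ge> 2"
begin

definition gb :: "nat \<Rightarrow> 'g" where
  "gb = (SOME g. (\<forall>i. g i \<in> carrier G) \<and> bij_betw (phi g m) (E m) (carrier G))"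

lemma gb: "(\<forall>i. gb i \<in> carrier G) \<and> bij_betw (phi gb m) (E m) (carrier G)"
  unfolding gb_def by (rule someI_ex[OF basis_exists[OF finG cardG]])

lemma gb_G[simp]: "gb i \<in> carrier G" using gb by blast

definition xx :: "nat \<Rightarrow> 'g \<Rightarrow> 'k" where "xx i = y (gb i)"

lemma xx_A[simp]: "xx i \<in> carrier A" by (simp add: xx_def)

definition Monk :: "nat \<Rightarrow> (nat \<Rightarrow> nat) \<Rightarrow> 'g \<Rightarrow> 'k" where
  "Monk k e = (\<Otimes>\<^bsub>A\<^esub>i\<in>{..<k}. xx i [^]\<^bsub>A\<^esub> e i)"

abbreviation "Mon \<equiv> Monk m"

definition deg :: "(nat \<Rightarrow> nat) \<Rightarrow> nat" where "deg e = (\<Sum>i<m. e i)"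

lemma Monk_A[simp]: "Monk k e \<in> carrier A"
  by (simp add: Monk_def)

lemma Mon_add: "Mon (\<lambda>i. e i + f i) = Mon e \<otimes>\<^bsub>A\<^esub> Mon f"
  by (simp add: Monk_def A.nat_pow_mult[symmetric] Pi_def)

lemma Mon_zero_exp: "Mon (\<lambda>_. 0) = \<one>\<^bsub>A\<^esub>"
  by (simp add: Monk_def)

lemma deg_add: "deg (\<lambda>i. e i + f i) = deg e + deg f"
  by (simp add: deg_def sum.distrib)

lemma Mon_big: assumes i: "i < m" and ei: "e i \<ge> p" shows "Mon e = \<zero>\<^bsub>A\<^esub>"
proof -
  have s: "{..<m} = insert i ({..<m} - {i})" using i by auto
  have "xx i [^]\<^bsub>A\<^esub> e i = xx i [^]\<^bsub>A\<^esub> p \<otimes>\<^bsub>A\<^esub> xx i [^]\<^bsub>A\<^esub> (e i - p)"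
    using ei by (simp add: A.nat_pow_mult)
  also have "\<dots> = \<zero>\<^bsub>A\<^esub>" by (simp add: xx_def y_pow_p)
  finally have z: "xx i [^]\<^bsub>A\<^esub> e i = \<zero>\<^bsub>A\<^esub>" .
  have "Mon e = xx i [^]\<^bsub>A\<^esub> e i \<otimes>\<^bsub>A\<^esub> (\<Otimes>\<^bsub>A\<^esub>j\<in>{..<m} - {i}. xx j [^]\<^bsub>A\<^esub> e j)"
    unfolding Monk_def by (subst s) (rule A.finprod_insert, auto)
  thus ?thesis using z by simp
qed

lemma Mon_unit: assumes i: "i < m" shows "Mon (\<lambda>j. if j = i then 1 else 0) = xx i"
proof -
  have s: "{..<m} = insert i ({..<m} - {i})" using i by auto
  have "Mon (\<lambda>j. if j = i then 1 else 0) = xx i [^]\<^bsub>A\<^esub> (1::nat) \<otimes>\<^bsub>A\<^esub> (\<Otimes>\<^bsub>A\<^esub>j\<in>{..<m} - {i}. xx j [^]\<^bsub>A\<^esub> (if j = i then 1 else 0::nat))"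
    unfolding Monk_def by (subst s, subst A.finprod_insert) auto
  also have "(\<Otimes>\<^bsub>A\<^esub>j\<in>{..<m} - {i}. xx j [^]\<^bsub>A\<^esub> (if j = i then 1 else 0::nat)) = \<one>\<^bsub>A\<^esub>"
    by (rule A.finprod_one_eqI) auto
  finally show ?thesis by simp
qed

lemma deg_unit: "i < m \<Longrightarrow> deg (\<lambda>j. if j = i then 1 else 0) = 1"
  by (simp add: deg_def)

end

context MLoc begin

abbreviation Jp :: "nat \<Rightarrow> ('g \<Rightarrow> 'k) set" where "Jp k \<equiv> ideal_pow A Iaug k"

lemma Jp_ideal: "ideal (Jp k) A" by (rule A.ideal_pow_ideal[OF Iaug_ideal])

lemma Jp_carrier: "u \<in> Jp k \<Longrightarrow> u \<in> carrier A"
  using subsetD[OF A.ideal_pow_carrier[OF Iaug_ideal]] .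

lemma Jp_mult: "u \<in> Jp a \<Longrightarrow> v \<in> Jp b \<Longrightarrow> u \<otimes>\<^bsub>A\<^esub> v \<in> Jp (a + b)"
  by (rule A.ideal_pow_mult[OF Iaug_ideal])

lemma Iaug_Jp1: "u \<in> Iaug \<Longrightarrow> u \<in> Jp 1"
proof -
  assume u: "u \<in> Iaug"
  have uc: "u \<in> carrier A" using u by (simp add: Iaug_def)
  have "u \<otimes>\<^bsub>A\<^esub> \<one>\<^bsub>A\<^esub> \<in> ideal_prod A Iaug (carrier A)" using u by (rule ideal_prod.prod) simp
  thus ?thesis using uc by simp
qed

lemma xx_pow_Jp: "xx i [^]\<^bsub>A\<^esub> (n::nat) \<in> Jp n"
proof (induction n)
  case 0 thus ?case by simp
next
  case (Suc n)
  have "xx i [^]\<^bsub>A\<^esub> n \<otimes>\<^bsub>A\<^esub> xx i \<in> Jp (n + 1)"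
    by (rule Jp_mult[OF Suc Iaug_Jp1]) (simp add: xx_def y_Iaug)
  thus ?case by simp
qed

lemma Monk_Jp: "Monk k e \<in> Jp (\<Sum>i<k. e i)"
proof (induction k)
  case 0 thus ?case by (simp add: Monk_def)
next
  case (Suc k)
  have "Monk (Suc k) e = xx k [^]\<^bsub>A\<^esub> e k \<otimes>\<^bsub>A\<^esub> Monk k e"
    unfolding Monk_def lessThan_Suc by (rule A.finprod_insert) auto
  moreover have "xx k [^]\<^bsub>A\<^esub> e k \<otimes>\<^bsub>A\<^esub> Monk k e \<in> Jp (e k + (\<Sum>i<k. e i))"
    by (rule Jp_mult[OF xx_pow_Jp Suc])
  ultimately show ?case by (simp add: add.commute)
qed

lemma Mon_Jp: "Mon e \<in> Jp (deg e)"
  unfolding deg_def by (rule Monk_Jp)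

inductive_set T :: "nat \<Rightarrow> ('g \<Rightarrow> 'k) set" for k :: nat where
  gen: "c \<in> carrier A \<Longrightarrow> deg e \<ge> k \<Longrightarrow> c \<otimes>\<^bsub>A\<^esub> Mon e \<in> T k"
| add: "u \<in> T k \<Longrightarrow> v \<in> T k \<Longrightarrow> u \<oplus>\<^bsub>A\<^esub> v \<in> T k"

lemma T_carrier: "u \<in> T k \<Longrightarrow> u \<in> carrier A"
  by (induction rule: T.induct) auto

lemma T_zero: "\<zero>\<^bsub>A\<^esub> \<in> T k"
proof -
  have "deg (\<lambda>_. k) \<ge> k" using m2 by (simp add: deg_def)
  hence "\<zero>\<^bsub>A\<^esub> \<otimes>\<^bsub>A\<^esub> Mon (\<lambda>_. k) \<in> T k" by (intro T.gen) auto
  thus ?thesis by simp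
qed

lemma T_lmult: "u \<in> T k \<Longrightarrow> c \<in> carrier A \<Longrightarrow> c \<otimes>\<^bsub>A\<^esub> u \<in> T k"
proof (induction rule: T.induct)
  case (gen c' e)
  have "c \<otimes>\<^bsub>A\<^esub> (c' \<otimes>\<^bsub>A\<^esub> Mon e) = (c \<otimes>\<^bsub>A\<^esub> c') \<otimes>\<^bsub>A\<^esub> Mon e"
    using gen by (simp add: A.m_assoc)
  thus ?case using gen by (simp add: T.gen)
next
  case (add u v)
  thus ?case using T_carrier by (simp add: A.r_distr T.add)
qed

lemma T_mult: "u \<in> T a \<Longrightarrow> v \<in> T b \<Longrightarrow> u \<otimes>\<^bsub>A\<^esub> v \<in> T (a + b)"
proof (induction u rule: T.induct)
  case (gen c e)
  from gen.prems show ?case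
  proof (induction v rule: T.induct)
    case (gen c' f)
    have "(c \<otimes>\<^bsub>A\<^esub> Mon e) \<otimes>\<^bsub>A\<^esub> (c' \<otimes>\<^bsub>A\<^esub> Mon f) = (c \<otimes>\<^bsub>A\<^esub> c') \<otimes>\<^bsub>A\<^esub> Mon (\<lambda>i. e i + f i)"
      using gen `c \<in> carrier A` by (simp add: Mon_add A.m_ac)
    moreover have "deg (\<lambda>i. e i + f i) \<ge> a + b" using gen `deg e \<ge> a` by (simp add: deg_add)
    ultimately show ?case using gen `c \<in> carrier A` by (simp add: T.gen)
  next
    case (add u v)
    thus ?case using T_carrier `c \<in> carrier A` by (simp add: A.r_distr T.add)
  qed
next
  case (add u1 u2)
  thus ?case using T_carrier by (simp add: A.l_distr T.add)
qed

lemma y_mult: assumes h: "h \<in> carrier G" and h': "h' \<in> carrier G"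
  shows "y (h \<otimes> h') = y h \<oplus>\<^bsub>A\<^esub> delta h \<otimes>\<^bsub>A\<^esub> y h'"
proof
  fix x
  show "y (h \<otimes> h') x = (y h \<oplus>\<^bsub>A\<^esub> delta h \<otimes>\<^bsub>A\<^esub> y h') x"
  proof (cases "x \<in> carrier G")
    case False
    have "x \<noteq> \<one>" "x \<noteq> h" "x \<noteq> h \<otimes> h'" using False h h' by auto
    thus ?thesis using h h' False by (simp add: y_eval add_A delta_mult)
  next
    case True
    have e1: "(inv h \<otimes> x = \<one>) = (x = h)" using h True by (metis G.inv_solve_left G.r_one G.one_closed)
    have e2: "(inv h \<otimes> x = h') = (x = h \<otimes> h')" using h h' True by (metis G.inv_solve_left)
    show ?thesis using h h' True by (simp add: y_eval add_A delta_mult e1 e2)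
  qed
qed

lemma y_one: "y \<one> = \<zero>\<^bsub>A\<^esub>"
  by (rule ext) (simp add: y_eval zero_A)

lemma xx_T1: "i < m \<Longrightarrow> xx i \<in> T 1"
proof -
  assume i: "i < m"
  have "\<one>\<^bsub>A\<^esub> \<otimes>\<^bsub>A\<^esub> Mon (\<lambda>j. if j = i then 1 else 0) \<in> T 1"
    using deg_unit[OF i] by (intro T.gen) auto
  thus ?thesis using Mon_unit[OF i] by simp
qed

lemma y_T1: assumes g: "g \<in> carrier G" shows "y g \<in> T 1"
proof -
  define K where "K = {h \<in> carrier G. y h \<in> T 1}"
  have Kmult: "h \<in> K \<Longrightarrow> h' \<in> K \<Longrightarrow> h \<otimes> h' \<in> K" for h h'
    unfolding K_def using T_lmult y_mult by (auto intro!: T.add)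
  have K1: "\<one> \<in> K" unfolding K_def using y_one T_zero by simp
  have Kpow: "h \<in> K \<Longrightarrow> h [^] (n::nat) \<in> K" for h n
    by (induction n) (simp_all add: K1 Kmult)
  have Kgb: "i < m \<Longrightarrow> gb i \<in> K" for i using xx_T1 by (simp add: K_def xx_def)
  have "finite F \<Longrightarrow> F \<subseteq> {..<m} \<Longrightarrow> (\<Otimes>i\<in>F. gb i [^] a i) \<in> K" for F and a :: "nat \<Rightarrow> nat"
  proof (induction F rule: finite_induct)
    case empty thus ?case using K1 by simp
  next
    case (insert i F)
    have "(\<Otimes>i\<in>insert i F. gb i [^] a i) = gb i [^] a i \<otimes> (\<Otimes>i\<in>F. gb i [^] a i)"
      by (rule G.finprod_insert) (use insert in \<open>auto intro: G.nat_pow_closed\<close>)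
    thus ?case using Kmult Kpow Kgb insert by simp
  qed
  hence "phi gb m a \<in> K" for a unfolding phi_def by blast
  moreover have "g \<in> phi gb m ` E m" using gb g by (simp add: bij_betw_def)
  ultimately show ?thesis unfolding K_def by blast
qed

lemma Iaug_T1: "Iaug \<subseteq> T 1"
proof (rule Iaug_sub)
  show "T 1 \<subseteq> carrier A" using T_carrier by blast
  show "\<And>g. g \<in> carrier G \<Longrightarrow> y g \<in> T 1" by (rule y_T1)
qed (auto simp: T_zero T.add T_lmult y_T1)

lemma Jp_T: "Jp k \<subseteq> T k"
proof (induction k)
  case 0
  show ?case
  proof
    fix c assume "c \<in> Jp 0"
    hence c: "c \<in> carrier A" by simp
    have "c \<otimes>\<^bsub>A\<^esub> Mon (\<lambda>_. 0) \<in> T 0" using c by (intro T.gen) auto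
    thus "c \<in> T 0" using c by (simp add: Mon_zero_exp)
  qed
next
  case (Suc k)
  show ?case
  proof
    fix u assume "u \<in> Jp (Suc k)"
    hence "u \<in> ideal_prod A Iaug (Jp k)" by simp
    thus "u \<in> T (Suc k)"
    proof (induction u rule: ideal_prod.induct)
      case (prod i j)
      have "i \<otimes>\<^bsub>A\<^esub> j \<in> T (1 + k)" using Iaug_T1 Suc prod by (intro T_mult) auto
      thus ?case by simp
    next
      case (sum s1 s2) thus ?case by (simp add: T.add)
    qed
  qed
qed

definition N :: nat where "N = m * (p - 1)"

lemma T_top: "u \<in> T (Suc N) \<Longrightarrow> u = \<zero>\<^bsub>A\<^esub>"
proof (induction rule: T.induct)
  case (gen c e)
  have "\<exists>i<m. e i \<ge> p"
  proof (rule ccontr)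
    assume "\<not> (\<exists>i<m. e i \<ge> p)"
    hence "\<forall>i<m. e i \<le> p - 1" by auto
    hence "deg e \<le> m * (p - 1)" unfolding deg_def
      using sum_bounded_above[of "{..<m}" e "p - 1"] by simp
    thus False using gen by (simp add: N_def)
  qed
  then obtain i where "i < m" "e i \<ge> p" by blast
  thus ?case using gen Mon_big by simp
next
  case (add u v) thus ?case by simp
qed

lemma Jp_top: "u \<in> Jp (Suc N) \<Longrightarrow> u = \<zero>\<^bsub>A\<^esub>"
  using Jp_T T_top by blast

end

context MLoc begin

lemma s_A: "s h \<in> carrier A" by (simp add: s_def carrier_A)

lemma s_finsum: assumes h: "h \<in> carrier G"
  shows "s h = (\<Oplus>\<^bsub>A\<^esub>j\<in>{..<p}. delta (h [^] j))"
proof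
  fix x
  have "(\<Oplus>\<^bsub>A\<^esub>j\<in>{..<p}. delta (h [^] j)) x = (\<Sum>j<p. delta (h [^] j) x)"
    using h by (subst finsum_eval) auto
  moreover have "x \<notin> carrier G \<Longrightarrow> h [^] (j::nat) \<noteq> x" for j using h by auto
  ultimately show "s h x = (\<Oplus>\<^bsub>A\<^esub>j\<in>{..<p}. delta (h [^] j)) x"
    using h by (auto simp: s_def delta_def eq_commute[of x])
qed

definition cnt :: "nat \<Rightarrow> 'g \<Rightarrow> 'k" where
  "cnt k = (\<lambda>x. if x \<in> carrier G then (\<Sum>a\<in>E k. if phi gb k a = x then 1 else 0) else 0)"

lemma cnt_A: "cnt k \<in> carrier A" by (simp add: cnt_def carrier_A)

lemma s_mult: assumes h: "h \<in> carrier G" and F: "F \<in> carrier A"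
  shows "s h \<otimes>\<^bsub>A\<^esub> F = (\<lambda>x. if x \<in> carrier G then (\<Sum>j<p. F (inv (h [^] j) \<otimes> x)) else 0)"
proof
  fix x
  have eq: "s h \<otimes>\<^bsub>A\<^esub> F = (\<Oplus>\<^bsub>A\<^esub>j\<in>{..<p}. delta (h [^] j) \<otimes>\<^bsub>A\<^esub> F)"
    using h F by (simp add: s_finsum A.finsum_ldistr)
  have "(s h \<otimes>\<^bsub>A\<^esub> F) x = (\<Sum>j<p. (delta (h [^] j) \<otimes>\<^bsub>A\<^esub> F) x)"
    unfolding eq using h F by (subst finsum_eval) auto
  thus "(s h \<otimes>\<^bsub>A\<^esub> F) x = (if x \<in> carrier G then (\<Sum>j<p. F (inv (h [^] j) \<otimes> x)) else 0)"
    using h F by (simp add: delta_mult)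
qed

lemma phi_upd: assumes a: "a \<in> E k"
  shows "phi gb (Suc k) (a(k := j)) = gb k [^] j \<otimes> phi gb k a"
proof -
  have "phi gb (Suc k) (a(k := j)) = gb k [^] (a(k:=j)) k \<otimes> phi gb k (a(k := j))"
    unfolding phi_def lessThan_Suc by (rule G.finprod_insert) (auto intro: G.nat_pow_closed)
  also have "phi gb k (a(k := j)) = phi gb k a"
    unfolding phi_def by (rule G.finprod_cong') (auto intro: G.nat_pow_closed)
  finally show ?thesis by (simp add: fun_upd_def)
qed

lemma cnt_Suc: "cnt (Suc k) = s (gb k) \<otimes>\<^bsub>A\<^esub> cnt k"
proof
  fix x
  show "cnt (Suc k) x = (s (gb k) \<otimes>\<^bsub>A\<^esub> cnt k) x"
  proof (cases "x \<in> carrier G")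
    case False
    have "(s (gb k) \<otimes>\<^bsub>A\<^esub> cnt k) x = 0" using False by (simp add: s_mult[OF gb_G cnt_A])
    moreover have "cnt (Suc k) x = 0" using False by (simp add: cnt_def)
    ultimately show ?thesis by simp
  next
    case True
    let ?f = "\<lambda>b. if phi gb (Suc k) b = x then 1 else (0::'k)"
    have EE: "E (Suc k) = (\<lambda>(j, a). a(k := j)) ` ({..<p} \<times> E k)"
      unfolding E_def lessThan_Suc by (rule PiE_insert_eq)
    have inj: "inj_on (\<lambda>(j, a). a(k := j)) ({..<p} \<times> E k)"
      unfolding E_def by (rule inj_combinator) simp
    have "(\<Sum>b\<in>E (Suc k). ?f b) = (\<Sum>(j, a)\<in>{..<p} \<times> E k. ?f (a(k := j)))"
      unfolding EE by (subst sum.reindex[OF inj]) (simp add: case_prod_beta')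
    also have "\<dots> = (\<Sum>j<p. \<Sum>a\<in>E k. ?f (a(k := j)))"
      by (rule sum.cartesian_product[symmetric])
    also have "\<dots> = (\<Sum>j<p. \<Sum>a\<in>E k. if phi gb k a = inv (gb k [^] j) \<otimes> x then 1 else 0)"
    proof (intro sum.cong refl)
      fix j :: nat and a assume a: "a \<in> E k"
      have pc: "phi gb k a \<in> carrier G" using phi_closed gb by blast
      have "(gb k [^] j \<otimes> phi gb k a = x) = (phi gb k a = inv (gb k [^] j) \<otimes> x)"
        using G.inv_solve_left[OF pc _ True, of "gb k [^] j"] by auto
      thus "?f (a(k := j)) = (if phi gb k a = inv (gb k [^] j) \<otimes> x then 1 else 0)"
        using phi_upd[OF a] by simp
    qed
    finally have "cnt (Suc k) x = (\<Sum>j<p. \<Sum>a\<in>E k. if phi gb k a = inv (gb k [^] j) \<otimes> x then 1 else 0)"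
      using True by (simp add: cnt_def)
    also have "\<dots> = (\<Sum>j<p. cnt k (inv (gb k [^] j) \<otimes> x))"
      using True by (simp add: cnt_def)
    also have "\<dots> = (s (gb k) \<otimes>\<^bsub>A\<^esub> cnt k) x"
      using True by (simp add: s_mult[OF gb_G cnt_A])
    finally show ?thesis .
  qed
qed

lemma cnt_0: "cnt 0 = \<one>\<^bsub>A\<^esub>"
  by (rule ext) (auto simp: cnt_def E_def phi_def one_A)

lemma Monk_top: "Monk k (\<lambda>_. p - 1) = cnt k"
proof (induction k)
  case 0 thus ?case by (simp add: Monk_def cnt_0)
next
  case (Suc k)
  have "Monk (Suc k) (\<lambda>_. p - 1) = xx k [^]\<^bsub>A\<^esub> (p - 1) \<otimes>\<^bsub>A\<^esub> Monk k (\<lambda>_. p - 1)"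
    unfolding Monk_def lessThan_Suc by (rule A.finprod_insert) auto
  thus ?case using Suc by (simp add: xx_def y_pow_pm1[simplified] cnt_Suc)
qed

lemma cnt_m: "cnt m = sig"
proof
  fix x
  show "cnt m x = sig x"
  proof (cases "x \<in> carrier G")
    case False thus ?thesis by (simp add: cnt_def sig_def)
  next
    case True
    have "(\<Sum>a\<in>E m. if phi gb m a = x then 1 else (0::'k)) = (\<Sum>g\<in>carrier G. if g = x then 1 else 0)"
      using gb by (intro sum.reindex_bij_betw) simp
    also have "\<dots> = 1" using True finG by simp
    finally show ?thesis using True by (simp add: cnt_def sig_def)
  qed
qed

lemma Mon_top: "Mon (\<lambda>_. p - 1) = sig"
  using Monk_top[of m] cnt_m by simp

lemma sig_JpN: "sig \<in> Jp N"
proof -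
  have "deg (\<lambda>_. p - 1) = N" by (simp add: deg_def N_def)
  thus ?thesis using Mon_Jp[of "\<lambda>_. p - 1"] Mon_top by simp
qed

end

lemma exist_bounded:
  fixes \<kappa> :: "nat \<Rightarrow> nat"
  shows "t \<le> (\<Sum>i<n. \<kappa> i) \<Longrightarrow> \<exists>e. (\<forall>i. e i \<le> \<kappa> i) \<and> (\<Sum>i<n. e i) = t"
proof (induction n arbitrary: t)
  case 0 thus ?case by (intro exI[of _ "\<lambda>_. 0"]) auto
next
  case (Suc n)
  define q where "q = min t (\<kappa> n)"
  have "t - q \<le> (\<Sum>i<n. \<kappa> i)" using Suc.prems by (auto simp: q_def)
  then obtain e where e: "\<forall>i. e i \<le> \<kappa> i" "(\<Sum>i<n. e i) = t - q" using Suc.IH by blast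
  have "(\<Sum>i<n. (e(n := q)) i) = (\<Sum>i<n. e i)" by (rule sum.cong) auto
  hence "(\<Sum>i<Suc n. (e(n := q)) i) = t" using e by (simp add: q_def)
  moreover have "\<forall>i. (e(n := q)) i \<le> \<kappa> i" using e by (auto simp: q_def)
  ultimately show ?case by blast
qed

context MLoc begin

lemma p2: "p \<ge> 2" using p_gt1 by simp

lemma sc_mult_eval: "f \<in> carrier A \<Longrightarrow> (sc c \<otimes>\<^bsub>A\<^esub> f) x = c * f x"
  by (simp add: sc_mult)

lemma sig_one: "sig \<one> = 1" by (simp add: sig_def)

lemma mult_sig_sc: "a \<in> carrier A \<Longrightarrow> a \<otimes>\<^bsub>A\<^esub> sig = sc (eps a) \<otimes>\<^bsub>A\<^esub> sig"
  unfolding mult_sig sc_mult[OF sig_A] by (rule ext) (simp add: sig_def)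

lemma ann_sig: assumes u: "u \<in> carrier A" and ann: "\<And>j. j \<in> Iaug \<Longrightarrow> j \<otimes>\<^bsub>A\<^esub> u = \<zero>\<^bsub>A\<^esub>"
  shows "u = (\<lambda>x. if x \<in> carrier G then u \<one> else 0)"
proof
  fix x
  show "u x = (if x \<in> carrier G then u \<one> else 0)"
  proof (cases "x \<in> carrier G")
    case False thus ?thesis using u by (simp add: inA)
  next
    case True
    have "y x \<otimes>\<^bsub>A\<^esub> u = \<zero>\<^bsub>A\<^esub>" using ann y_Iaug True by blast
    moreover have "y x \<otimes>\<^bsub>A\<^esub> u = u \<ominus>\<^bsub>A\<^esub> delta x \<otimes>\<^bsub>A\<^esub> u"
      using True u by (simp add: y_def a_minus_def A.l_distr A.l_minus)
    ultimately have Z: "u \<ominus>\<^bsub>A\<^esub> delta x \<otimes>\<^bsub>A\<^esub> u = \<zero>\<^bsub>A\<^esub>" by simp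
    have eq: "\<And>z. (u \<ominus>\<^bsub>A\<^esub> delta x \<otimes>\<^bsub>A\<^esub> u) z = u z - (delta x \<otimes>\<^bsub>A\<^esub> u) z"
      using minus_A[OF u A.m_closed[OF delta_A[OF True] u]] by simp
    have dm: "\<And>z. (delta x \<otimes>\<^bsub>A\<^esub> u) z = (if z \<in> carrier G then u (inv x \<otimes> z) else 0)"
      using delta_mult[OF True u] by simp
    have "u x - (delta x \<otimes>\<^bsub>A\<^esub> u) x = 0" using fun_cong[OF Z, of x] eq[of x] by (simp add: zero_A)
    hence "u x = u \<one>" using dm[of x] True by simp
    thus ?thesis using True by simp
  qed
qed

lemma JpN_ann: assumes u: "u \<in> Jp N" and j: "j \<in> Iaug" shows "j \<otimes>\<^bsub>A\<^esub> u = \<zero>\<^bsub>A\<^esub>"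
proof -
  have "j \<otimes>\<^bsub>A\<^esub> u \<in> Jp (1 + N)" by (rule Jp_mult[OF Iaug_Jp1[OF j] u])
  thus ?thesis by (intro Jp_top) simp
qed

lemma const_eq: "(\<lambda>x. if x \<in> carrier G then c else 0) = sc c \<otimes>\<^bsub>A\<^esub> sig"
  unfolding sc_mult[OF sig_A] by (rule ext) (simp add: sig_def)

lemma JpN_eq: "Jp N = {(\<lambda>g. if g \<in> carrier G then c else 0) | c. True}"
proof
  show "Jp N \<subseteq> {(\<lambda>g. if g \<in> carrier G then c else 0) | c. True}"
  proof
    fix u assume u: "u \<in> Jp N"
    have "u = (\<lambda>x. if x \<in> carrier G then u \<one> else 0)"
      using ann_sig[OF Jp_carrier[OF u]] JpN_ann[OF u] by blast
    thus "u \<in> {(\<lambda>g. if g \<in> carrier G then c else 0) | c. True}" by blast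
  qed
  show "{(\<lambda>g. if g \<in> carrier G then c else 0) | c. True} \<subseteq> Jp N"
    using sig_JpN Jp_ideal[of N] by (auto simp: const_eq ideal.I_l_closed)
qed

lemma JpN_principal: "principalideal (Jp N) A"
proof (rule principalidealI[OF Jp_ideal])
  have "Jp N = PIdl\<^bsub>A\<^esub> sig"
  proof
    show "Jp N \<subseteq> PIdl\<^bsub>A\<^esub> sig" unfolding JpN_eq cgenideal_def const_eq by auto
    show "PIdl\<^bsub>A\<^esub> sig \<subseteq> Jp N" unfolding cgenideal_def using sig_JpN Jp_ideal[of N]
      by (auto simp: ideal.I_l_closed)
  qed
  thus "\<exists>i\<in>carrier A. Jp N = Idl\<^bsub>A\<^esub> {i}" using A.cgenideal_eq_genideal[OF sig_A] sig_A by blast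
qed

lemma decomp_mult: assumes u: "u \<in> carrier A" and v: "v \<in> Jp r" and d: "d \<in> Jp (N - r)" and r: "r \<le> N"
  shows "(u \<otimes>\<^bsub>A\<^esub> v) \<otimes>\<^bsub>A\<^esub> d = sc (eps u) \<otimes>\<^bsub>A\<^esub> (v \<otimes>\<^bsub>A\<^esub> d)"
proof -
  have vc: "v \<in> carrier A" using Jp_carrier v .
  have dc: "d \<in> carrier A" using Jp_carrier d .
  define u' where "u' = u \<ominus>\<^bsub>A\<^esub> sc (eps u)"
  have u'I: "u' \<in> Iaug" unfolding u'_def using u by (simp add: Iaug_def eps_minus eps_sc)
  have u'c: "u' \<in> carrier A" using u by (simp add: u'_def)
  have "(u' \<otimes>\<^bsub>A\<^esub> v) \<otimes>\<^bsub>A\<^esub> d \<in> Jp ((1 + r) + (N - r))"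
    by (rule Jp_mult[OF Jp_mult[OF Iaug_Jp1[OF u'I] v] d])
  hence z: "(u' \<otimes>\<^bsub>A\<^esub> v) \<otimes>\<^bsub>A\<^esub> d = \<zero>\<^bsub>A\<^esub>" using r Jp_top by simp
  have ueq: "sc (eps u) \<oplus>\<^bsub>A\<^esub> u' = u" using u by (simp add: u'_def a_minus_def A.a_ac A.r_neg)
  have "((sc (eps u) \<oplus>\<^bsub>A\<^esub> u') \<otimes>\<^bsub>A\<^esub> v) \<otimes>\<^bsub>A\<^esub> d = (sc (eps u) \<otimes>\<^bsub>A\<^esub> v) \<otimes>\<^bsub>A\<^esub> d \<oplus>\<^bsub>A\<^esub> (u' \<otimes>\<^bsub>A\<^esub> v) \<otimes>\<^bsub>A\<^esub> d"
    using u'c vc dc by (simp add: A.l_distr)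
  hence "(u \<otimes>\<^bsub>A\<^esub> v) \<otimes>\<^bsub>A\<^esub> d = (sc (eps u) \<otimes>\<^bsub>A\<^esub> v) \<otimes>\<^bsub>A\<^esub> d \<oplus>\<^bsub>A\<^esub> (u' \<otimes>\<^bsub>A\<^esub> v) \<otimes>\<^bsub>A\<^esub> d"
    by (simp only: ueq)
  thus ?thesis using z vc dc u'c by (simp add: A.m_assoc)
qed

lemma choose_e: assumes r: "1 \<le> r" "r \<le> N - 1"
  shows "\<exists>e. (\<forall>i. e i \<le> p - 1) \<and> e 0 \<le> p - 2 \<and> e 1 \<le> p - 2 \<and> deg e = r - 1"
proof -
  define \<kappa> where "\<kappa> = (\<lambda>i::nat. if i < 2 then p - 2 else p - 1)"
  have sk: "(\<Sum>i<k. \<kappa> i) = k * (p - 1) - 2" if "k \<ge> 2" for k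
    using that
  proof (induction k rule: dec_induct)
    case base thus ?case using p2 by (simp add: \<kappa>_def numeral_2_eq_2)
  next
    case (step k)
    have "k * (p - Suc 0) \<ge> 2 * 1" using mult_le_mono[of 2 k 1 "p - Suc 0"] step p2 by simp
    thus ?case using step p2 by (simp add: \<kappa>_def)
  qed
  have "r - 1 \<le> (\<Sum>i<m. \<kappa> i)" using sk[OF m2] r by (simp add: N_def)
  then obtain e where e: "\<forall>i. e i \<le> \<kappa> i" "(\<Sum>i<m. e i) = r - 1" using exist_bounded by blast
  have "\<forall>i. e i \<le> p - 1"
  proof
    fix i have "\<kappa> i \<le> p - 1" by (simp add: \<kappa>_def diff_le_mono2)
    thus "e i \<le> p - 1" using e(1) le_trans by blast
  qed
  moreover have "e 0 \<le> p - 2" "e 1 \<le> p - 2" using e(1)[rule_format, of 0] e(1)[rule_format, of 1] by (simp_all add: \<kappa>_def)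
  ultimately show ?thesis using e(2) by (auto simp: deg_def)
qed

end

context MLoc begin

lemma scal_closed[simp]: "f \<in> carrier A \<Longrightarrow> (\<lambda>x. c * f x) \<in> carrier A"
  by (simp add: carrier_A)

lemma monos_ex: assumes r: "1 \<le> r" "r \<le> N - 1"
  shows "\<exists>a b a' b'. a \<in> Jp r \<and> b \<in> Jp r \<and> a' \<in> Jp (N - r) \<and> b' \<in> Jp (N - r)
     \<and> a \<otimes>\<^bsub>A\<^esub> a' = sig \<and> b \<otimes>\<^bsub>A\<^esub> b' = sig \<and> a \<otimes>\<^bsub>A\<^esub> b' = \<zero>\<^bsub>A\<^esub> \<and> b \<otimes>\<^bsub>A\<^esub> a' = \<zero>\<^bsub>A\<^esub>"
proof -
  obtain e where e: "\<forall>i. e i \<le> p - 1" "e 0 \<le> p - 2" "e 1 \<le> p - 2" "deg e = r - 1"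
    using choose_e[OF r] by blast
  have m0: "0 < m" "1 < m" using m2 by auto
  define ea where "ea = (\<lambda>i. e i + (if i = 0 then 1 else 0::nat))"
  define eb where "eb = (\<lambda>i. e i + (if i = 1 then 1 else 0::nat))"
  define ca where "ca = (\<lambda>i. p - 1 - ea i)"
  define cb where "cb = (\<lambda>i. p - 1 - eb i)"
  have dea: "deg ea = r" unfolding ea_def using deg_add deg_unit[OF m0(1)] e(4) r by simp
  have deb: "deg eb = r" unfolding eb_def using deg_add deg_unit[OF m0(2)] e(4) r by simp
  have eale: "\<And>i. ea i \<le> p - 1" unfolding ea_def using e p2 by (auto simp: le_diff_conv2)
  have eble: "\<And>i. eb i \<le> p - 1" unfolding eb_def using e p2 by (auto simp: le_diff_conv2)
  have sa: "(\<lambda>i. ea i + ca i) = (\<lambda>_. p - 1)" unfolding ca_def by (rule ext, metis eale le_add_diff_inverse)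
  have sb: "(\<lambda>i. eb i + cb i) = (\<lambda>_. p - 1)" unfolding cb_def by (rule ext, metis eble le_add_diff_inverse)
  have degtop: "deg (\<lambda>_. p - 1) = N" by (simp add: deg_def N_def)
  have dca: "deg ca = N - r" using deg_add[of ea ca] sa degtop dea by simp
  have dcb: "deg cb = N - r" using deg_add[of eb cb] sb degtop deb by simp
  have p1: "Mon ea \<otimes>\<^bsub>A\<^esub> Mon ca = sig" using Mon_add[of ea ca] sa Mon_top by simp
  have p2': "Mon eb \<otimes>\<^bsub>A\<^esub> Mon cb = sig" using Mon_add[of eb cb] sb Mon_top by simp
  have p3: "Mon ea \<otimes>\<^bsub>A\<^esub> Mon cb = \<zero>\<^bsub>A\<^esub>"
  proof -
    have "ea 0 + cb 0 \<ge> p" unfolding ea_def cb_def eb_def using e p2 by simp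
    thus ?thesis using Mon_add[of ea cb] Mon_big[OF m0(1), of "\<lambda>i. ea i + cb i"] by simp
  qed
  have p4: "Mon eb \<otimes>\<^bsub>A\<^esub> Mon ca = \<zero>\<^bsub>A\<^esub>"
  proof -
    have "eb 1 + ca 1 \<ge> p" unfolding eb_def ca_def ea_def using e p2 by simp
    thus ?thesis using Mon_add[of eb ca] Mon_big[OF m0(2), of "\<lambda>i. eb i + ca i"] by simp
  qed
  show ?thesis
    using Mon_Jp[of ea] Mon_Jp[of eb] Mon_Jp[of ca] Mon_Jp[of cb] dea deb dca dcb p1 p2' p3 p4
    by (intro exI[of _ "Mon ea"] exI[of _ "Mon eb"] exI[of _ "Mon ca"] exI[of _ "Mon cb"]) simp
qed

lemma not_principal: assumes r: "0 < r" "r < N" shows "\<not> principalideal (Jp r) A"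
proof
  assume "principalideal (Jp r) A"
  then obtain v where v: "v \<in> carrier A" "Jp r = Idl\<^bsub>A\<^esub> {v}"
    by (auto simp: principalideal_def principalideal_axioms_def)
  hence JP: "Jp r = PIdl\<^bsub>A\<^esub> v" using A.cgenideal_eq_genideal by simp
  have vJ: "v \<in> Jp r" using v A.genideal_self' by simp
  have r1: "1 \<le> r" "r \<le> N - 1" using r by auto
  obtain a b a' b' where ab: "a \<in> Jp r" "b \<in> Jp r" "a' \<in> Jp (N - r)" "b' \<in> Jp (N - r)"
     "a \<otimes>\<^bsub>A\<^esub> a' = sig" "b \<otimes>\<^bsub>A\<^esub> b' = sig" "a \<otimes>\<^bsub>A\<^esub> b' = \<zero>\<^bsub>A\<^esub>" "b \<otimes>\<^bsub>A\<^esub> a' = \<zero>\<^bsub>A\<^esub>"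
    using monos_ex[OF r1] by blast
  obtain u where u: "u \<in> carrier A" "a = u \<otimes>\<^bsub>A\<^esub> v" using ab(1) JP by (auto simp: cgenideal_def)
  obtain u' where u': "u' \<in> carrier A" "b = u' \<otimes>\<^bsub>A\<^esub> v" using ab(2) JP by (auto simp: cgenideal_def)
  have rN: "r \<le> N" using r by simp
  define w where "w = v \<otimes>\<^bsub>A\<^esub> a'"
  define w' where "w' = v \<otimes>\<^bsub>A\<^esub> b'"
  have wc: "w \<in> carrier A" "w' \<in> carrier A" using v ab Jp_carrier by (auto simp: w_def w'_def)
  have e1: "sig = sc (eps u) \<otimes>\<^bsub>A\<^esub> w" using decomp_mult[OF u(1) vJ ab(3) rN] ab(5) u by (simp add: w_def)
  have e2: "\<zero>\<^bsub>A\<^esub> = sc (eps u') \<otimes>\<^bsub>A\<^esub> w" using decomp_mult[OF u'(1) vJ ab(3) rN] ab(8) u' by (simp add: w_def)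
  have e3: "\<zero>\<^bsub>A\<^esub> = sc (eps u) \<otimes>\<^bsub>A\<^esub> w'" using decomp_mult[OF u(1) vJ ab(4) rN] ab(7) u by (simp add: w'_def)
  have e4: "sig = sc (eps u') \<otimes>\<^bsub>A\<^esub> w'" using decomp_mult[OF u'(1) vJ ab(4) rN] ab(6) u' by (simp add: w'_def)
  have f1: "1 = eps u * w \<one>" using fun_cong[OF e1, of \<one>] sc_mult_eval[OF wc(1)] sig_one by simp
  have f2: "0 = eps u' * w \<one>" using fun_cong[OF e2, of \<one>] sc_mult_eval[OF wc(1)] by (simp add: zero_A)
  have f4: "1 = eps u' * w' \<one>" using fun_cong[OF e4, of \<one>] sc_mult_eval[OF wc(2)] sig_one by simp
  have "w \<one> \<noteq> 0" using f1 by auto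
  hence "eps u' = 0" using f2 by simp
  thus False using f4 by simp
qed

lemma Jp1: "Jp 1 = Iaug"
proof
  show "Jp 1 \<subseteq> Iaug" using A.ideal_prod_inter[OF Iaug_ideal A.oneideal] by simp
  show "Iaug \<subseteq> Jp 1" using Iaug_Jp1 by blast
qed

lemma checkable0: "checkable (Jp 0) A"
  unfolding checkable_def by (intro bexI[of _ "\<zero>\<^bsub>A\<^esub>"]) auto

lemma checkable1: "checkable (Jp 1) A"
  unfolding checkable_def Jp1
proof (intro bexI[of _ sig])
  show "Iaug = {a \<in> carrier A. sig \<otimes>\<^bsub>A\<^esub> a = \<zero>\<^bsub>A\<^esub>}"
  proof safe
    fix a assume a: "a \<in> Iaug"
    thus "a \<in> carrier A" by (simp add: Iaug_def)
    have "sig \<otimes>\<^bsub>A\<^esub> a = sc (eps a) \<otimes>\<^bsub>A\<^esub> sig" using a by (simp add: Iaug_def A.m_comm mult_sig_sc)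
    also have "\<dots> = \<zero>\<^bsub>A\<^esub>" using a by (simp add: Iaug_def sc_mult zero_A)
    finally show "sig \<otimes>\<^bsub>A\<^esub> a = \<zero>\<^bsub>A\<^esub>" .
  next
    fix a assume a: "a \<in> carrier A" and z: "sig \<otimes>\<^bsub>A\<^esub> a = \<zero>\<^bsub>A\<^esub>"
    have "sc (eps a) \<otimes>\<^bsub>A\<^esub> sig = \<zero>\<^bsub>A\<^esub>" using a z by (simp add: A.m_comm mult_sig_sc)
    hence "eps a * sig \<one> = 0" using fun_cong[of _ _ \<one>] sc_mult_eval[OF sig_A] by (metis zero_A)
    thus "a \<in> Iaug" using a sig_one by (simp add: Iaug_def)
  qed
qed simp

lemma not_checkable: assumes i: "2 \<le> i" "i \<le> N" shows "\<not> checkable (Jp i) A"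
proof
  assume "checkable (Jp i) A"
  then obtain v where v: "v \<in> carrier A" "Jp i = {z \<in> carrier A. v \<otimes>\<^bsub>A\<^esub> z = \<zero>\<^bsub>A\<^esub>}"
    by (auto simp: checkable_def)
  define r where "r = N + 1 - i"
  have r: "1 \<le> r" "r \<le> N - 1" "N - r = i - 1" "i + r = Suc N" using i by (auto simp: r_def)
  obtain a b a' b' where ab: "a \<in> Jp r" "b \<in> Jp r" "a' \<in> Jp (i - 1)" "b' \<in> Jp (i - 1)"
     "a \<otimes>\<^bsub>A\<^esub> a' = sig" "b \<otimes>\<^bsub>A\<^esub> b' = sig" "a \<otimes>\<^bsub>A\<^esub> b' = \<zero>\<^bsub>A\<^esub>" "b \<otimes>\<^bsub>A\<^esub> a' = \<zero>\<^bsub>A\<^esub>"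
    using monos_ex[OF r(1,2)] r(3) by auto
  have ac: "a \<in> carrier A" "b \<in> carrier A" "a' \<in> carrier A" "b' \<in> carrier A" using ab Jp_carrier by auto
  have inJ: "z \<in> Jp i \<longleftrightarrow> z \<in> carrier A \<and> v \<otimes>\<^bsub>A\<^esub> z = \<zero>\<^bsub>A\<^esub>" for z using v by auto
  have top: "z \<in> Jp i \<Longrightarrow> q \<in> Jp r \<Longrightarrow> z \<otimes>\<^bsub>A\<^esub> q = \<zero>\<^bsub>A\<^esub>" for z q
    using Jp_mult[of z i q r] r(4) Jp_top by simp
  have vq: "v \<otimes>\<^bsub>A\<^esub> q = sc ((v \<otimes>\<^bsub>A\<^esub> q) \<one>) \<otimes>\<^bsub>A\<^esub> sig" if q: "q \<in> Jp (i - 1)" for q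
  proof -
    have qc: "q \<in> carrier A" using q Jp_carrier by simp
    have "v \<otimes>\<^bsub>A\<^esub> q = (\<lambda>x. if x \<in> carrier G then (v \<otimes>\<^bsub>A\<^esub> q) \<one> else 0)"
    proof (rule ann_sig)
      show "v \<otimes>\<^bsub>A\<^esub> q \<in> carrier A" using v qc by simp
      fix j assume j: "j \<in> Iaug"
      have jc: "j \<in> carrier A" using j by (simp add: Iaug_def)
      have "j \<otimes>\<^bsub>A\<^esub> q \<in> Jp (1 + (i - 1))" by (rule Jp_mult[OF Iaug_Jp1[OF j] q])
      hence "j \<otimes>\<^bsub>A\<^esub> q \<in> Jp i" using i by simp
      hence "v \<otimes>\<^bsub>A\<^esub> (j \<otimes>\<^bsub>A\<^esub> q) = \<zero>\<^bsub>A\<^esub>" using inJ by blast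
      thus "j \<otimes>\<^bsub>A\<^esub> (v \<otimes>\<^bsub>A\<^esub> q) = \<zero>\<^bsub>A\<^esub>" using jc qc v by (simp add: A.m_lcomm)
    qed
    thus ?thesis by (simp add: const_eq)
  qed
  define lam where "lam = (v \<otimes>\<^bsub>A\<^esub> a') \<one>"
  define mu where "mu = (v \<otimes>\<^bsub>A\<^esub> b') \<one>"
  have va: "v \<otimes>\<^bsub>A\<^esub> a' = sc lam \<otimes>\<^bsub>A\<^esub> sig" using vq[OF ab(3)] by (simp add: lam_def)
  have vb: "v \<otimes>\<^bsub>A\<^esub> b' = sc mu \<otimes>\<^bsub>A\<^esub> sig" using vq[OF ab(4)] by (simp add: mu_def)
  define w where "w = sc mu \<otimes>\<^bsub>A\<^esub> a' \<ominus>\<^bsub>A\<^esub> sc lam \<otimes>\<^bsub>A\<^esub> b'"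
  have wc: "w \<in> carrier A" using ac by (simp add: w_def)
  have "v \<otimes>\<^bsub>A\<^esub> w = sc mu \<otimes>\<^bsub>A\<^esub> (v \<otimes>\<^bsub>A\<^esub> a') \<ominus>\<^bsub>A\<^esub> sc lam \<otimes>\<^bsub>A\<^esub> (v \<otimes>\<^bsub>A\<^esub> b')"
    using v ac by (simp add: w_def a_minus_def A.r_distr A.r_minus A.m_lcomm)
  also have "\<dots> = \<zero>\<^bsub>A\<^esub>"
    unfolding va vb by (rule ext) (simp add: minus_A sc_mult zero_A)
  finally have "w \<in> Jp i" using wc inJ by simp
  have wa: "w \<otimes>\<^bsub>A\<^esub> a = sc mu \<otimes>\<^bsub>A\<^esub> sig"
  proof -
    have "a' \<otimes>\<^bsub>A\<^esub> a = sig" "b' \<otimes>\<^bsub>A\<^esub> a = \<zero>\<^bsub>A\<^esub>" using ac ab(5,7) by (simp_all add: A.m_comm)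
    thus ?thesis using ac by (simp add: w_def a_minus_def A.l_distr A.l_minus A.m_assoc A.r_null)
  qed
  have wb: "w \<otimes>\<^bsub>A\<^esub> b = \<ominus>\<^bsub>A\<^esub> (sc lam \<otimes>\<^bsub>A\<^esub> sig)"
  proof -
    have "a' \<otimes>\<^bsub>A\<^esub> b = \<zero>\<^bsub>A\<^esub>" "b' \<otimes>\<^bsub>A\<^esub> b = sig" using ac ab(6,8) by (simp_all add: A.m_comm)
    thus ?thesis using ac by (simp add: w_def a_minus_def A.l_distr A.l_minus A.m_assoc A.r_null)
  qed
  have "w \<otimes>\<^bsub>A\<^esub> a = \<zero>\<^bsub>A\<^esub>" using top[OF \<open>w \<in> Jp i\<close> ab(1)] .
  hence "(sc mu \<otimes>\<^bsub>A\<^esub> sig) \<one> = 0" using wa by (simp add: zero_A)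
  hence "mu = 0" using sc_mult_eval[OF sig_A] sig_one by simp
  have "w \<otimes>\<^bsub>A\<^esub> b = \<zero>\<^bsub>A\<^esub>" using top[OF \<open>w \<in> Jp i\<close> ab(2)] .
  hence "(\<ominus>\<^bsub>A\<^esub> (sc lam \<otimes>\<^bsub>A\<^esub> sig)) \<one> = 0" using wb by (simp add: zero_A)
  hence "lam = 0" using sc_mult_eval[OF sig_A] sig_one a_inv_A[of "sc lam \<otimes>\<^bsub>A\<^esub> sig"] by simp
  hence "v \<otimes>\<^bsub>A\<^esub> a' = \<zero>\<^bsub>A\<^esub>" using va by (simp add: sc_mult zero_A)
  hence "a' \<in> Jp i" using inJ ac by simp
  hence "a' \<otimes>\<^bsub>A\<^esub> a = \<zero>\<^bsub>A\<^esub>" using top ab(1) by simp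
  hence "sig = \<zero>\<^bsub>A\<^esub>" using ab(5) ac by (simp add: A.m_comm)
  thus False using sig_one by (metis zero_A zero_neq_one)
qed

end

theorem mainTheorem4:
  fixes G :: "('g, 'c) monoid_scheme" (structure)
    and p m :: nat
  assumes "Factorial_Ring.prime p" and "m \<ge> 2"
    and "comm_group G" and "finite (carrier G)" and "card (carrier G) = p ^ m"
    and "\<forall>x\<in>carrier G. x [^] p = \<one>"
    and "card (UNIV :: 'k set) = p"
  defines "A \<equiv> (group_algebra G :: ('g \<Rightarrow> 'k::{field,finite}) ring)"
    and "J \<equiv> jacobson_radical (group_algebra G :: ('g \<Rightarrow> 'k) ring)"
    and "N \<equiv> m * (p - 1)"
  shows "(\<forall>r. 0 < r \<and> r < N \<longrightarrow> \<not> principalideal (ideal_pow A J r) A)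
       \<and> ideal_pow A J N = {(\<lambda>g. if g \<in> carrier G then c else 0) | c :: 'k. True}
       \<and> principalideal (ideal_pow A J N) A
       \<and> (\<forall>i \<le> N. checkable (ideal_pow A J i) A \<longleftrightarrow> i \<in> {0, 1})"
proof -
  have "CHAR('k) dvd p" using CHAR_dvd_CARD[where 'a='k] assms(7) by simp
  hence "CHAR('k) = 1 \<or> CHAR('k) = p" using assms(1) unfolding prime_nat_iff by auto
  hence "CHAR('k) = p" using CHAR_not_1[where 'a='k] by auto
  hence charp: "of_nat p = (0::'k)" using of_nat_CHAR[where 'a='k] by simp
  interpret M: MLoc G A p m
    by (intro MLoc.intro GAp.intro GA.intro EAG.intro GAp_axioms.intro GA_axioms.intro
          EAG_axioms.intro MLoc_axioms.intro) (use assms(1-7) charp in \<open>simp_all add: A_def\<close>)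
  have JI: "J = M.Iaug" unfolding J_def A_def[symmetric] by (rule M.jacobson_eq)
  have NN: "N = M.N" by (simp add: N_def M.N_def)
  show ?thesis unfolding JI NN
  proof (intro conjI allI impI)
    fix r assume "0 < r \<and> r < M.N"
    thus "\<not> principalideal (ideal_pow A M.Iaug r) A" using M.not_principal by blast
  next
    show "ideal_pow A M.Iaug M.N = {(\<lambda>g. if g \<in> carrier G then c else 0) | c :: 'k. True}"
      by (rule M.JpN_eq)
  next
    show "principalideal (ideal_pow A M.Iaug M.N) A" by (rule M.JpN_principal)
  next
    fix i assume i: "i \<le> M.N"
    show "checkable (ideal_pow A M.Iaug i) A \<longleftrightarrow> i \<in> {0, 1}"
    proof (cases "i \<in> {0, 1}")
      case True thus ?thesis using M.checkable0 M.checkable1 by auto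
    next
      case False
      hence "2 \<le> i" by auto
      thus ?thesis using M.not_checkable[OF _ i] False by blast
    qed
  qed
qed

end
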